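(* Run the distributed regularized primal-dual algorithm described in the context for $T$ iterations with stepsize $\alpha(t)=\frac{R}{\sqrt{t+1}}$ and regularization parameter $\eta>0$ satisfying $\eta\alpha(t)\le\frac12$ for all $t\in[T]$. Then, as $T\to\infty$, \[ \left\|\left[\frac1n\sum_{i=1}^n g(\widehat{x}_i(T))\right]_+\right\|_2^2=\mathcal{O}(\eta). \] Furthermore, if the optimal solution $x_\ast$ is strictly feasible, i.e. $g_k(x_\ast)<0$ for all $k$, then \[ \left\|\left[\frac1n\sum_{i=1}^n g(\widehat{x}_i(T))\right]_+\right\|_2^2=\mathcal{O}\!\left(\frac{\eta\log(T)}{\sqrt{T}}\right). \]
   Context: $[v]_+$ denotes the componentwise positive part $\max\{0,v\}$. Norms are Euclidean. Problem: minimize $f(x)=\frac1n\sum_{i=1}^n f_i(x)$ over $\mathcal{X}=\{x\in\mathbb{R}^d: g_k(x)\le 0,\ k=1,\dots,m\}$; write $g=(g_1,\dots,g_m)^T$. Assumptions: $\mathcal{X}$ is non-empty, convex and compact; $R$ is the smallest radius with $\mathcal{X}\subseteq \mathbb{B}_d(R)=\{x:\|x\|\le R\}$; there is a Slater vector $\tilde x$ with $g_k(\tilde x)<0$ for all $k$; all $f_i$ and $g_k$ are convex on $\mathbb{B}_d(R)$ and all their subgradients there satisfy $\|\nabla f_i(x)\|\le L$, $\|\nabla g_k(x)\|\le L$. $x_\ast$ denotes an optimal solution. Agents $1,\dots,n$ are nodes of a connected graph $G=(V,E)$; $W\in\mathbb{R}^{n\times n}$ is doubly stochastic with $W_{ij}>0$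 if $(i,j)\in E$ and $W_{ij}=0$ if $(i,j)\notin E$. Regularized Lagrangian of agent $i$: $L_i(x,\lambda)=f_i(x)+\langle\lambda,g(x)\rangle-\frac{\eta}{2}\|\lambda\|^2$, with subgradients $\nabla_xL_i(x,\lambda)=\nabla f_i(x)+\sum_{k=1}^m\lambda_k\nabla g_k(x)$ and $\nabla_\lambda L_i(x,\lambda)=g(x)-\eta\lambda$. Algorithm: $x_i(0)=0$, $\lambda_i(0)=0$; for $t=0,1,2,\dots$: $y_i(t)=x_i(t)-\alpha(t)\nabla_xL_i(x_i(t),\lambda_i(t))$, $\gamma_i(t)=\lambda_i(t)+\alpha(t)\nabla_\lambda L_i(x_i(t),\lambda_i(t))$, $x_i(t+1)=\Pi_{\mathbb{B}_d(R)}(\sum_j W_{ij}y_j(t))$, $\lambda_i(t+1)=\Pi_{\mathbb{R}^m_+}(\sum_jW_{ij}\gamma_j(t))$, where $\Pi$ denotes Euclidean projection. The estimate is $\widehat{x}_i(T)=\sum_{t=0}^{T-1}\alpha(t)x_i(t)/\sum_{t=0}^{T-1}\alpha(t)$. *)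

theory Defs
  imports "HOL-Analysis.Analysis"
begin

definition gvec :: "('m::finite \<Rightarrow> real^'d::finite \<Rightarrow> real) \<Rightarrow> real^'d \<Rightarrow> real^'m" where
  "gvec g x = (\<chi> k. g k x)"

definition pos_part :: "real^'m::finite \<Rightarrow> real^'m" where
  "pos_part v = (\<chi> k. max 0 (v $ k))"

definition nonneg_orthant :: "(real^'m::finite) set" where
  "nonneg_orthant = {v. \<forall>k. 0 \<le> v $ k}"

definition feas_set :: "('m::finite \<Rightarrow> real^'d::finite \<Rightarrow> real) \<Rightarrow> (real^'d) set" where
  "feas_set g = {x. \<forall>k. g k x \<le> 0}"

definition avg_obj :: "('n::finite \<Rightarrow> real^'d::finite \<Rightarrow> real) \<Rightarrow> real^'d \<Rightarrow> real" where
  "avg_obj f x = (\<Sum>i\<in>UNIV. f i x) / real CARD('n)"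

definition stepsize :: "real \<Rightarrow> nat \<Rightarrow> real" where
  "stepsize R t = R / sqrt (real t + 1)"

text \<open>Parameters: subgradient selections
  df (of f_i) and dg (of g_k), constraint functions g, mixing matrix W, radius R,
  regularization eta, stepsizes alpha.\<close>
primrec alg_state ::
  "('n::finite \<Rightarrow> real^'d::finite \<Rightarrow> real^'d) \<Rightarrow> ('m::finite \<Rightarrow> real^'d \<Rightarrow> real^'d)
   \<Rightarrow> ('m \<Rightarrow> real^'d \<Rightarrow> real) \<Rightarrow> ('n \<Rightarrow> 'n \<Rightarrow> real) \<Rightarrow> real \<Rightarrow> real \<Rightarrow> (nat \<Rightarrow> real)
   \<Rightarrow> nat \<Rightarrow> ('n \<Rightarrow> real^'d) \<times> ('n \<Rightarrow> real^'m)" where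
  "alg_state df dg g W R \<eta> \<alpha> 0 = ((\<lambda>i. 0), (\<lambda>i. 0))"
| "alg_state df dg g W R \<eta> \<alpha> (Suc t) =
     (let X = fst (alg_state df dg g W R \<eta> \<alpha> t);
          \<Lambda> = snd (alg_state df dg g W R \<eta> \<alpha> t);
          y = (\<lambda>i. X i - \<alpha> t *\<^sub>R (df i (X i) + (\<Sum>k\<in>UNIV. (\<Lambda> i $ k) *\<^sub>R dg k (X i))));
          \<gamma> = (\<lambda>i. \<Lambda> i + \<alpha> t *\<^sub>R (gvec g (X i) - \<eta> *\<^sub>R \<Lambda> i))
      in ((\<lambda>i. closest_point (cball 0 R) (\<Sum>j\<in>UNIV. W i j *\<^sub>R y j)),
          (\<lambda>i. closest_point nonneg_orthant (\<Sum>j\<in>UNIV. W i j *\<^sub>R \<gamma> j))))"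

definition xhat ::
  "('n::finite \<Rightarrow> real^'d::finite \<Rightarrow> real^'d) \<Rightarrow> ('m::finite \<Rightarrow> real^'d \<Rightarrow> real^'d)
   \<Rightarrow> ('m \<Rightarrow> real^'d \<Rightarrow> real) \<Rightarrow> ('n \<Rightarrow> 'n \<Rightarrow> real) \<Rightarrow> real \<Rightarrow> real \<Rightarrow> (nat \<Rightarrow> real)
   \<Rightarrow> 'n \<Rightarrow> nat \<Rightarrow> real^'d" where
  "xhat df dg g W R \<eta> \<alpha> i T =
     (1 / (\<Sum>t<T. \<alpha> t)) *\<^sub>R (\<Sum>t<T. \<alpha> t *\<^sub>R fst (alg_state df dg g W R \<eta> \<alpha> t) i)"

definition viol ::
  "('n::finite \<Rightarrow> real^'d::finite \<Rightarrow> real^'d) \<Rightarrow> ('m::finite \<Rightarrow> real^'d \<Rightarrow> real^'d)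
   \<Rightarrow> ('m \<Rightarrow> real^'d \<Rightarrow> real) \<Rightarrow> ('n \<Rightarrow> 'n \<Rightarrow> real) \<Rightarrow> real \<Rightarrow> real \<Rightarrow> nat \<Rightarrow> real" where
  "viol df dg g W R \<eta> T =
     (norm (pos_part ((1 / real CARD('n)) *\<^sub>R
        (\<Sum>i\<in>UNIV. gvec g (xhat df dg g W R \<eta> (stepsize R) i T))))) ^ 2"

end

theory Submission
  imports Defs
begin


definition mapp :: "('n::finite \<Rightarrow> 'n \<Rightarrow> real) \<Rightarrow> ('n \<Rightarrow> 'a::real_vector) \<Rightarrow> 'n \<Rightarrow> 'a" where
  "mapp A v = (\<lambda>i. \<Sum>j\<in>UNIV. A i j *\<^sub>R v j)"

definition mmul :: "('n::finite \<Rightarrow> 'n \<Rightarrow> real) \<Rightarrow> ('n \<Rightarrow> 'n \<Rightarrow> real) \<Rightarrow> 'n \<Rightarrow> 'n \<Rightarrow> real" where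
  "mmul A B = (\<lambda>i k. \<Sum>j\<in>UNIV. A i j * B j k)"

primrec mpow :: "('n::finite \<Rightarrow> 'n \<Rightarrow> real) \<Rightarrow> nat \<Rightarrow> 'n \<Rightarrow> 'n \<Rightarrow> real" where
  "mpow A 0 = (\<lambda>i j. if i = j then 1 else 0)"
| "mpow A (Suc k) = mmul A (mpow A k)"

lemma mapp_mmul: "mapp (mmul A B) v = mapp A (mapp B v)"
proof (rule ext)
  fix i
  have "mapp (mmul A B) v i = (\<Sum>k\<in>UNIV. \<Sum>j\<in>UNIV. (A i j * B j k) *\<^sub>R v k)"
    unfolding mapp_def mmul_def by (simp add: scaleR_sum_left)
  also have "\<dots> = (\<Sum>j\<in>UNIV. \<Sum>k\<in>UNIV. (A i j * B j k) *\<^sub>R v k)"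
    by (rule sum.swap)
  also have "\<dots> = mapp A (mapp B v) i"
    unfolding mapp_def by (simp add: scaleR_sum_right)
  finally show "mapp (mmul A B) v i = mapp A (mapp B v) i" .
qed

lemma mmul_assoc: "mmul (mmul A B) C = mmul A (mmul B C)"
  unfolding mmul_def
  by (auto simp: sum_distrib_left sum_distrib_right mult.assoc intro!: ext | subst sum.swap)+

lemma mmul_id_left: "mmul (\<lambda>i j. if i = j then 1 else 0) B = B"
  unfolding mmul_def by (auto intro!: ext simp: if_distrib[where f="\<lambda>x. x * _"] cong: if_cong)

lemma mmul_id_right: "mmul B (\<lambda>i j. if i = j then 1 else 0) = B"
  unfolding mmul_def by (auto intro!: ext simp: if_distrib[where f="\<lambda>x. _ * x"] cong: if_cong)

lemma mpow_add: "mpow A (a + b) = mmul (mpow A a) (mpow A b)"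
  by (induction a) (simp_all add: mmul_id_left[of "mpow A b" for b] mmul_assoc)

lemma mpow_one: "mpow A 1 = A"
  by (simp add: mmul_id_right[of A])

declare mmul_id_right[simp] mmul_id_left[simp]

lemma mapp_add: "mapp A (\<lambda>i. v i + w i) = (\<lambda>i. mapp A v i + mapp A w i)"
  unfolding mapp_def by (auto simp: scaleR_add_right sum.distrib)

lemma mapp_diff: "mapp A (\<lambda>i. v i - w i) = (\<lambda>i. mapp A v i - mapp A w i)"
  unfolding mapp_def by (auto simp: scaleR_diff_right sum_subtractf)

lemma prob_diff:
  fixes v :: "'n::finite \<Rightarrow> 'a::real_normed_vector"
  assumes p0: "\<And>j. p j \<ge> 0" and q0: "\<And>j. q j \<ge> 0"
    and p1: "(\<Sum>j\<in>UNIV. p j) = 1" and q1: "(\<Sum>j\<in>UNIV. q j) = 1"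
    and D: "\<And>j j'. p j > 0 \<Longrightarrow> q j' > 0 \<Longrightarrow> norm (v j - v j') \<le> D"
  shows "norm ((\<Sum>j\<in>UNIV. p j *\<^sub>R v j) - (\<Sum>j\<in>UNIV. q j *\<^sub>R v j)) \<le> D"
proof -
  have e1: "(\<Sum>j\<in>UNIV. \<Sum>j'\<in>UNIV. (p j * q j') *\<^sub>R v j) = (\<Sum>j\<in>UNIV. p j *\<^sub>R v j)"
    by (simp add: scaleR_sum_left[symmetric] sum_distrib_left[symmetric] q1)
  have e2: "(\<Sum>j\<in>UNIV. \<Sum>j'\<in>UNIV. (p j * q j') *\<^sub>R v j') = (\<Sum>j\<in>UNIV. q j *\<^sub>R v j)"
    apply (subst sum.swap)
    by (simp add: scaleR_sum_left[symmetric] sum_distrib_right[symmetric] p1)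
  have "(\<Sum>j\<in>UNIV. p j *\<^sub>R v j) - (\<Sum>j\<in>UNIV. q j *\<^sub>R v j)
      = (\<Sum>j\<in>UNIV. \<Sum>j'\<in>UNIV. (p j * q j') *\<^sub>R (v j - v j'))"
    by (simp add: e1[symmetric] e2[symmetric] scaleR_diff_right sum_subtractf)
  also have "norm \<dots> \<le> (\<Sum>j\<in>UNIV. \<Sum>j'\<in>UNIV. norm ((p j * q j') *\<^sub>R (v j - v j')))"
    by (rule order_trans[OF norm_sum sum_mono[OF norm_sum]])
  also have "\<dots> \<le> (\<Sum>j\<in>UNIV. \<Sum>j'\<in>UNIV. (p j * q j') * D)"
  proof (intro sum_mono)
    fix j j'
    show "norm ((p j * q j') *\<^sub>R (v j - v j')) \<le> p j * q j' * D"
    proof (cases "p j > 0 \<and> q j' > 0")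
      case True
      then show ?thesis using D[of j j'] p0[of j] q0[of j']
        by (simp add: mult_left_mono)
    next
      case False
      then have "p j = 0 \<or> q j' = 0" using p0[of j] q0[of j'] by linarith
      then show ?thesis by auto
    qed
  qed
  also have "\<dots> = D"
    by (simp add: sum_distrib_right[symmetric] sum_distrib_left[symmetric] p1 q1)
  finally show ?thesis .
qed

locale consensus =
  fixes W :: "'n::finite \<Rightarrow> 'n \<Rightarrow> real" and E :: "('n \<times> 'n) set"
  assumes E_sym: "sym E"
    and E_connected: "\<And>i j. (i, j) \<in> E\<^sup>*"
    and W_nonneg: "\<And>i j. W i j \<ge> 0"
    and W_rows: "\<And>i. (\<Sum>j\<in>UNIV. W i j) = 1"
    and W_cols: "\<And>j. (\<Sum>i\<in>UNIV. W i j) = 1"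
    and W_edge: "\<And>i j. (i, j) \<in> E \<Longrightarrow> W i j > 0"
    and W_nonedge: "\<And>i j. (i, j) \<notin> E \<Longrightarrow> W i j = 0"
begin

lemma W_pos_sym: "W i j > 0 \<Longrightarrow> W j i > 0"
  using W_nonedge[of i j] W_edge[of j i] E_sym by (auto simp: sym_def)

lemma mpow_nonneg: "mpow W k i j \<ge> 0"
proof (induction k arbitrary: i j)
  case 0 then show ?case by simp
next
  case (Suc k) then show ?case
    by (simp add: mmul_def sum_nonneg W_nonneg)
qed

lemma mpow_rows: "(\<Sum>j\<in>UNIV. mpow W k i j) = 1"
proof (induction k arbitrary: i)
  case 0 then show ?case by simp
next
  case (Suc k)
  have "(\<Sum>j\<in>UNIV. mpow W (Suc k) i j) = (\<Sum>l\<in>UNIV. W i l * (\<Sum>j\<in>UNIV. mpow W k l j))"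
    by (simp add: mmul_def sum_distrib_left) (rule sum.swap)
  also have "\<dots> = 1" using Suc W_rows by simp
  finally show ?case .
qed

lemma mpow_le1: "mpow W k i j \<le> 1"
proof -
  have "mpow W k i j \<le> (\<Sum>j\<in>UNIV. mpow W k i j)"
    by (rule member_le_sum) (auto simp: mpow_nonneg)
  then show ?thesis by (simp add: mpow_rows)
qed

lemma mmul_ge:
  assumes "\<And>i j. A i j \<ge> 0" "\<And>i j. B i j \<ge> 0"
  shows "mmul A B i j \<ge> A i l * B l j"
  unfolding mmul_def by (rule member_le_sum) (auto intro: mult_nonneg_nonneg assms)

lemma mpow_ge: "mpow W (a + b) i j \<ge> mpow W a i l * mpow W b l j"
  unfolding mpow_add by (rule mmul_ge) (auto simp: mpow_nonneg)

lemma mpow_Suc_pos: "mpow W (Suc k) i j > 0 \<Longrightarrow> \<exists>l. W i l > 0 \<and> mpow W k l j > 0"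
proof (rule ccontr)
  assume a: "mpow W (Suc k) i j > 0" "\<not> (\<exists>l. W i l > 0 \<and> mpow W k l j > 0)"
  then have "\<And>l. W i l * mpow W k l j = 0"
    using W_nonneg mpow_nonneg by (metis less_eq_real_def mult_eq_0_iff)
  then have "mpow W (Suc k) i j = 0" by (simp add: mmul_def, intro sum.neutral, auto)
  then show False using a(1) by simp
qed

lemma mpow_pos_sym: "mpow W k i j > 0 \<Longrightarrow> mpow W k j i > 0"
proof (induction k arbitrary: i j)
  case 0 then show ?case by (auto split: if_splits)
next
  case (Suc k)
  then obtain l where l: "W i l > 0" "mpow W k l j > 0" using mpow_Suc_pos by blast
  have "mpow W (k + 1) j i \<ge> mpow W k j l * mpow W 1 l i" by (rule mpow_ge)
  moreover have "mpow W k j l * mpow W 1 l i > 0"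
    using Suc.IH[OF l(2)] W_pos_sym[OF l(1)] by (simp add: mpow_one)
  ultimately show ?case by simp
qed

lemma exists_nbr: "\<exists>l. W i l > 0"
proof (rule ccontr)
  assume "\<not> ?thesis"
  then have "\<And>l. W i l = 0" using W_nonneg by (metis less_eq_real_def)
  then show False using W_rows[of i] by simp
qed

lemma mpow2_diag: "mpow W 2 i i > 0"
proof -
  obtain l where l: "W i l > 0" using exists_nbr by blast
  have "mpow W (1 + 1) i i \<ge> mpow W 1 i l * mpow W 1 l i" by (rule mpow_ge)
  moreover have "mpow W 1 i l * mpow W 1 l i > 0" using l W_pos_sym[OF l] by (simp add: mpow_one)
  ultimately show ?thesis by (simp add: numeral_2_eq_2)
qed

lemma mpow_mono: "mpow W (2 * k) i j > 0 \<Longrightarrow> k \<le> k' \<Longrightarrow> mpow W (2 * k') i j > 0"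
proof (induction k' )
  case 0 then show ?case by simp
next
  case (Suc k')
  show ?case
  proof (cases "k \<le> k'")
    case True
    then have h: "mpow W (2 * k') i j > 0" using Suc by blast
    have "mpow W (2 + 2 * k') i j \<ge> mpow W 2 i i * mpow W (2 * k') i j" by (rule mpow_ge)
    moreover have "mpow W 2 i i * mpow W (2 * k') i j > 0" using h mpow2_diag by simp
    ultimately show ?thesis by simp
  next
    case False
    then have "k = Suc k'" using Suc by simp
    then show ?thesis using Suc by simp
  qed
qed

definition rel :: "'n \<Rightarrow> 'n \<Rightarrow> bool" where
  "rel i j \<longleftrightarrow> (\<exists>k. mpow W (2 * k) i j > 0)"

lemma rel_refl: "rel i i"
  unfolding rel_def by (rule exI[of _ 0]) simp

lemma rel_sym: "rel i j \<Longrightarrow> rel j i"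
  unfolding rel_def using mpow_pos_sym by blast

lemma rel_trans: "rel i j \<Longrightarrow> rel j l \<Longrightarrow> rel i l"
  unfolding rel_def
proof (elim exE)
  fix a b assume a: "mpow W (2 * a) i j > 0" and b: "mpow W (2 * b) j l > 0"
  have "mpow W (2 * a + 2 * b) i l \<ge> mpow W (2 * a) i j * mpow W (2 * b) j l" by (rule mpow_ge)
  moreover have "mpow W (2 * a) i j * mpow W (2 * b) j l > 0" using a b by simp
  ultimately have "mpow W (2 * (a + b)) i l > 0" by (simp add: algebra_simps)
  then show "\<exists>k. mpow W (2 * k) i l > 0" by blast
qed

lemma rel_nbr:
  assumes "W i j > 0" "W i' j' > 0" "rel i i'"
  shows "rel j j'"
proof -
  obtain k where k: "mpow W (2 * k) i i' > 0" using assms(3) unfolding rel_def by blast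
  have h1: "mpow W (1 + 2 * k) j i' \<ge> mpow W 1 j i * mpow W (2 * k) i i'" by (rule mpow_ge)
  have "mpow W 1 j i * mpow W (2 * k) i i' > 0" using W_pos_sym[OF assms(1)] k by (simp add: mpow_one)
  then have h1': "mpow W (1 + 2 * k) j i' > 0" using h1 by linarith
  have h2: "mpow W ((1 + 2 * k) + 1) j j' \<ge> mpow W (1 + 2 * k) j i' * mpow W 1 i' j'" by (rule mpow_ge)
  have "mpow W (1 + 2 * k) j i' * mpow W 1 i' j' > 0" using h1' assms(2) by (simp add: mpow_one)
  then have "mpow W (2 * (k + 1)) j j' > 0" using h2 by (simp add: algebra_simps)
  then show ?thesis unfolding rel_def by blast
qed

lemma walk_exists: "(i, j) \<in> E\<^sup>* \<Longrightarrow> \<exists>k. mpow W k i j > 0"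
proof (induction rule: rtrancl_induct)
  case base
  then show ?case by (rule exI[of _ 0]) simp
next
  case (step y z)
  then obtain k where k: "mpow W k i y > 0" by blast
  have h: "mpow W (k + 1) i z \<ge> mpow W k i y * mpow W 1 y z" by (rule mpow_ge)
  have "mpow W k i y * mpow W 1 y z > 0" using k W_edge[OF step(2)] by (simp add: mpow_one)
  then show ?case using h by (metis order_less_le_trans)
qed

lemma rel_conn: "W i' j > 0 \<Longrightarrow> rel i i' \<or> rel i j"
proof -
  assume w: "W i' j > 0"
  obtain k where k: "mpow W k i i' > 0" using walk_exists E_connected by blast
  show ?thesis
  proof (cases "even k")
    case True
    then obtain m where "k = 2 * m" by (auto elim: evenE)
    then show ?thesis using k unfolding rel_def by blast
  next
    case False
    then obtain m where m: "k = 2 * m + 1" by (auto elim: oddE)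
    have h: "mpow W (k + 1) i j \<ge> mpow W k i i' * mpow W 1 i' j" by (rule mpow_ge)
    have "mpow W k i i' * mpow W 1 i' j > 0" using k w by (simp add: mpow_one)
    then have "mpow W (2 * (m + 1)) i j > 0" using h m by (simp add: algebra_simps)
    then show ?thesis unfolding rel_def by blast
  qed
qed

end


context consensus begin

definition K :: nat where
  "K = Max ((\<lambda>(i,j). LEAST k. mpow W (2*k) i j > 0) ` {(i,j). rel i j}) + 1"

lemma rel_K: "rel i j \<Longrightarrow> mpow W (2 * K) i j > 0"
proof -
  assume r: "rel i j"
  let ?k = "LEAST k. mpow W (2*k) i j > 0"
  have pk: "mpow W (2 * ?k) i j > 0" using r unfolding rel_def by (rule LeastI_ex)
  have "?k \<le> Max ((\<lambda>(i,j). LEAST k. mpow W (2*k) i j > 0) ` {(i,j). rel i j})"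
    by (rule Max_ge) (use r in auto)
  then have "?k \<le> K" unfolding K_def by simp
  then show ?thesis using mpow_mono[OF pk] by blast
qed

lemma rel_iff: "rel i j \<longleftrightarrow> mpow W (2 * K) i j > 0"
  using rel_K unfolding rel_def by blast

lemma K_pos: "K > 0" unfolding K_def by simp

definition Q where "Q = mpow W (2 * K)"

definition d0 :: real where "d0 = Min ((\<lambda>(i,j). Q i j) ` {(i,j). rel i j})"

lemma d0_le: "rel i j \<Longrightarrow> d0 \<le> Q i j"
  unfolding d0_def by (rule Min_le) auto

lemma d0_pos: "d0 > 0"
proof -
  have "d0 \<in> (\<lambda>(i,j). Q i j) ` {(i,j). rel i j}"
    unfolding d0_def by (rule Min_in) (auto intro: rel_refl)
  then show ?thesis using rel_K unfolding Q_def by auto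
qed

definition dc :: real where "dc = d0 / 2"

lemma dc_pos: "dc > 0" and dc_lt1: "dc < 1" and dc_le: "rel i j \<Longrightarrow> dc \<le> Q i j"
proof -
  have "d0 \<le> Q i i" by (rule d0_le[OF rel_refl])
  also have "\<dots> \<le> 1" unfolding Q_def by (rule mpow_le1)
  finally have "d0 \<le> 1" .
  then show "dc > 0" "dc < 1" using d0_pos unfolding dc_def by auto
  show "rel i j \<Longrightarrow> dc \<le> Q i j" using d0_le d0_pos unfolding dc_def by fastforce
qed

definition nu :: "('n \<Rightarrow> 'a::real_normed_vector) \<Rightarrow> real" where
  "nu v = Max ((\<lambda>(i,j). norm (v i - v j)) ` {(i,j). rel i j})"

lemma nu_ge: "rel i j \<Longrightarrow> norm (v i - v j) \<le> nu v"
  unfolding nu_def by (rule Max_ge) auto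

lemma nu_le: "(\<And>i j. rel i j \<Longrightarrow> norm (v i - v j) \<le> c) \<Longrightarrow> nu v \<le> c"
  unfolding nu_def by (subst Max_le_iff) (auto intro: rel_refl)

lemma nu_nonneg: "nu v \<ge> 0"
  using nu_ge[OF rel_refl, of v] by (metis norm_ge_zero order_trans)

lemma delta_sum: "(v :: 'n \<Rightarrow> 'a::real_vector) i = (\<Sum>j\<in>UNIV. (if j = i then 1 else 0) *\<^sub>R v j)"
proof -
  have "(\<Sum>j\<in>UNIV. (if j = i then 1 else 0) *\<^sub>R v j) = (\<Sum>j\<in>UNIV. if j = i then v j else 0)"
    by (rule sum.cong) simp_all
  then show ?thesis by simp
qed

lemma nu_W: "nu (mapp W v) \<le> nu v"
proof (rule nu_le)
  fix i i' assume r: "rel i i'"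
  show "norm (mapp W v i - mapp W v i') \<le> nu v"
    unfolding mapp_def
    by (rule prob_diff) (auto simp: W_nonneg W_rows intro!: nu_ge rel_nbr[OF _ _ r])
qed

lemma nu_mpow: "nu (mapp (mpow W k) v) \<le> nu v"
proof (induction k)
  case 0
  have "mapp (mpow W 0) v = v"
  proof (rule ext)
    fix x
    have "(\<Sum>j\<in>UNIV. mpow W 0 x j *\<^sub>R v j) = (\<Sum>j\<in>UNIV. if x = j then v j else 0)"
      by (rule sum.cong) simp_all
    then show "mapp (mpow W 0) v x = v x" unfolding mapp_def by simp
  qed
  then show ?case by simp
next
  case (Suc k)
  then show ?case by (simp add: mapp_mmul) (metis nu_W order_trans)
qed

lemma nu_Q: "nu (mapp Q v) \<le> (1 - dc) * nu v"
proof (rule nu_le)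
  fix i i' assume r: "rel i i'"
  define p where "p j = (Q i j - (if j = i then dc else 0)) / (1 - dc)" for j
  define q where "q j = (Q i' j - (if j = i then dc else 0)) / (1 - dc)" for j
  have Qi: "Q i j = (1 - dc) * p j + (if j = i then dc else 0)" for j
    using dc_lt1 unfolding p_def by (simp add: field_simps)
  have Qi': "Q i' j = (1 - dc) * q j + (if j = i then dc else 0)" for j
    using dc_lt1 unfolding q_def by (simp add: field_simps)
  have s1: "(\<Sum>j\<in>UNIV. Q i j *\<^sub>R v j) = (1 - dc) *\<^sub>R (\<Sum>j\<in>UNIV. p j *\<^sub>R v j) + dc *\<^sub>R v i"
  proof -
    have "\<And>j. Q i j *\<^sub>R v j = (1 - dc) *\<^sub>R (p j *\<^sub>R v j) + (if j = i then dc *\<^sub>R v j else 0)"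
      by (simp add: Qi scaleR_add_left)
    then have "(\<Sum>j\<in>UNIV. Q i j *\<^sub>R v j) = (\<Sum>j\<in>UNIV. (1 - dc) *\<^sub>R (p j *\<^sub>R v j)) + (\<Sum>j\<in>UNIV. (if j = i then dc *\<^sub>R v j else 0))"
      by (simp add: sum.distrib)
    then show ?thesis by (simp add: scaleR_sum_right)
  qed
  have s2: "(\<Sum>j\<in>UNIV. Q i' j *\<^sub>R v j) = (1 - dc) *\<^sub>R (\<Sum>j\<in>UNIV. q j *\<^sub>R v j) + dc *\<^sub>R v i"
  proof -
    have "\<And>j. Q i' j *\<^sub>R v j = (1 - dc) *\<^sub>R (q j *\<^sub>R v j) + (if j = i then dc *\<^sub>R v j else 0)"
      by (simp add: Qi' scaleR_add_left)
    then have "(\<Sum>j\<in>UNIV. Q i' j *\<^sub>R v j) = (\<Sum>j\<in>UNIV. (1 - dc) *\<^sub>R (q j *\<^sub>R v j)) + (\<Sum>j\<in>UNIV. (if j = i then dc *\<^sub>R v j else 0))"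
      by (simp add: sum.distrib)
    then show ?thesis by (simp add: scaleR_sum_right)
  qed
  have Qnn: "Q a b \<ge> 0" for a b unfolding Q_def by (rule mpow_nonneg)
  have Qrows: "(\<Sum>j\<in>UNIV. Q a j) = 1" for a unfolding Q_def by (rule mpow_rows)
  have p0: "p j \<ge> 0" for j
    using dc_le[OF rel_refl[of i]] Qnn[of i j] dc_lt1 unfolding p_def by auto
  have q0: "q j \<ge> 0" for j
    using dc_le[OF rel_sym[OF r]] Qnn[of i' j] dc_lt1 unfolding q_def by auto
  have p1: "(\<Sum>j\<in>UNIV. p j) = 1"
    using dc_lt1 unfolding p_def by (simp add: sum_divide_distrib[symmetric] sum_subtractf Qrows)
  have q1: "(\<Sum>j\<in>UNIV. q j) = 1"
    using dc_lt1 unfolding q_def by (simp add: sum_divide_distrib[symmetric] sum_subtractf Qrows)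
  have pr: "rel i j" if "p j > 0" for j
  proof (cases "j = i")
    case True then show ?thesis by (simp add: rel_refl)
  next
    case False then have "Q i j = (1 - dc) * p j" using Qi[of j] by simp
    then have "Q i j > 0" using that dc_lt1 by simp
    then show ?thesis unfolding Q_def rel_iff .
  qed
  have qr: "rel i' j" if "q j > 0" for j
  proof (cases "j = i")
    case True then show ?thesis by (simp add: rel_sym[OF r])
  next
    case False then have "Q i' j = (1 - dc) * q j" using Qi'[of j] by simp
    then have "Q i' j > 0" using that dc_lt1 by simp
    then show ?thesis unfolding Q_def rel_iff .
  qed
  have "norm ((\<Sum>j\<in>UNIV. p j *\<^sub>R v j) - (\<Sum>j\<in>UNIV. q j *\<^sub>R v j)) \<le> nu v"
  proof (rule prob_diff[OF p0 q0 p1 q1])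
    fix j j' assume a: "p j > 0" and b: "q j' > 0"
    have "rel j j'" using rel_trans[OF rel_sym[OF pr[OF a]] rel_trans[OF r qr[OF b]]] .
    then show "norm (v j - v j') \<le> nu v" by (rule nu_ge)
  qed
  then have "(1 - dc) * norm ((\<Sum>j\<in>UNIV. p j *\<^sub>R v j) - (\<Sum>j\<in>UNIV. q j *\<^sub>R v j)) \<le> (1 - dc) * nu v"
    using dc_lt1 by (simp add: mult_left_mono)
  moreover have "mapp Q v i - mapp Q v i' = (1 - dc) *\<^sub>R ((\<Sum>j\<in>UNIV. p j *\<^sub>R v j) - (\<Sum>j\<in>UNIV. q j *\<^sub>R v j))"
  proof -
    have "mapp Q v i - mapp Q v i' = ((1 - dc) *\<^sub>R (\<Sum>j\<in>UNIV. p j *\<^sub>R v j) + dc *\<^sub>R v i)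
       - ((1 - dc) *\<^sub>R (\<Sum>j\<in>UNIV. q j *\<^sub>R v j) + dc *\<^sub>R v i)"
      by (simp only: mapp_def s1 s2)
    then show ?thesis by (simp only: scaleR_diff_right add_diff_add diff_self add_0_right)
  qed
  ultimately show "norm (mapp Q v i - mapp Q v i') \<le> (1 - dc) * nu v"
    using dc_lt1 by (simp only: norm_scaleR)
qed

lemma nu_add: "nu (\<lambda>i. v i + w i) \<le> nu v + nu w"
proof (rule nu_le)
  fix i j assume r: "rel i j"
  have "norm ((v i + w i) - (v j + w j)) = norm ((v i - v j) + (w i - w j))" by (simp add: algebra_simps)
  also have "\<dots> \<le> norm (v i - v j) + norm (w i - w j)" by (rule norm_triangle_ineq)
  also have "\<dots> \<le> nu v + nu w" using nu_ge[OF r, of v] nu_ge[OF r, of w] by simp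
  finally show "norm ((v i + w i) - (v j + w j)) \<le> nu v + nu w" .
qed

lemma nu_bound:
  assumes b: "\<And>i. norm (v i) \<le> c"
  shows "nu v \<le> 2 * c"
proof (rule nu_le)
  fix i j
  have "norm (v i - v j) \<le> norm (v i) + norm (v j)" by (rule norm_triangle_ineq4)
  also have "\<dots> \<le> 2 * c" using b[of i] b[of j] by simp
  finally show "norm (v i - v j) \<le> 2 * c" .
qed

lemma mid_pair:
  "norm ((1/2) *\<^sub>R (v i + mapp W v i) - (1/2) *\<^sub>R (v l + mapp W v l)) \<le> nu v"
proof (cases "rel i l")
  case True
  have "(1/2) *\<^sub>R (v i + mapp W v i) - (1/2) *\<^sub>R (v l + mapp W v l)
        = (1/2) *\<^sub>R ((v i - v l) + (mapp W v i - mapp W v l))" by (simp add: algebra_simps)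
  also have "norm \<dots> \<le> (1/2) * (norm (v i - v l) + norm (mapp W v i - mapp W v l))"
    using norm_triangle_ineq by simp
  also have "\<dots> \<le> (1/2) * (nu v + nu v)"
    using nu_ge[OF True, of v] nu_ge[OF True, of "mapp W v"] nu_W[of v] by simp
  finally show ?thesis by simp
next
  case False
  have d1: "(\<Sum>j\<in>UNIV. (if j = x then 1 else 0)) = (1::real)" for x :: 'n by simp
  have a: "norm (v i - mapp W v l) \<le> nu v"
    unfolding mapp_def
  proof (subst delta_sum[of v i], rule prob_diff)
    fix j j' assume a1: "(if j = i then 1 else 0::real) > 0" and a2: "W l j' > 0"
    have "j = i" using a1 by (auto split: if_splits)
    moreover have "rel i j'" using rel_conn[OF a2, of i] False by blast
    ultimately show "norm (v j - v j') \<le> nu v" by (simp add: nu_ge)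
  qed (simp_all add: W_nonneg W_rows d1)
  have b: "norm (mapp W v i - v l) \<le> nu v"
    unfolding mapp_def
  proof (subst delta_sum[of v l], rule prob_diff)
    fix j j' assume a1: "W i j > 0" and a2: "(if j' = l then 1 else 0::real) > 0"
    have "j' = l" using a2 by (auto split: if_splits)
    moreover have "rel l j" using rel_conn[OF a1, of l] False rel_sym by blast
    ultimately show "norm (v j - v j') \<le> nu v" by (simp add: nu_ge rel_sym)
  qed (simp_all add: W_nonneg W_rows d1)
  have "(1/2) *\<^sub>R (v i + mapp W v i) - (1/2) *\<^sub>R (v l + mapp W v l)
        = (1/2) *\<^sub>R ((v i - mapp W v l) + (mapp W v i - v l))" by (simp add: algebra_simps)
  also have "norm \<dots> \<le> (1/2) * (norm (v i - mapp W v l) + norm (mapp W v i - v l))"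
    using norm_triangle_ineq by simp
  also have "\<dots> \<le> (1/2) * (nu v + nu v)" using a b by simp
  finally show ?thesis by simp
qed

lemma mid_bound:
  "norm ((1/2) *\<^sub>R (v i + mapp W v i) - (1 / real CARD('n)) *\<^sub>R (\<Sum>l\<in>UNIV. v l)) \<le> nu v"
proof -
  define m where "m l = (1/2) *\<^sub>R (v l + mapp W v l)" for l
  have sW: "(\<Sum>l\<in>UNIV. mapp W v l) = (\<Sum>l\<in>UNIV. v l)"
    unfolding mapp_def by (subst sum.swap) (simp add: scaleR_sum_left[symmetric] W_cols)
  have sm: "(\<Sum>l\<in>UNIV. m l) = (\<Sum>l\<in>UNIV. v l)"
    unfolding m_def by (simp add: scaleR_sum_right[symmetric] sum.distrib sW)
  have N: "real CARD('n) > 0" by simp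
  have "m i - (1 / real CARD('n)) *\<^sub>R (\<Sum>l\<in>UNIV. v l) = (1 / real CARD('n)) *\<^sub>R (\<Sum>l\<in>UNIV. m i - m l)"
  proof -
    have "(1 / real CARD('n)) *\<^sub>R (\<Sum>l\<in>UNIV. m i - m l)
        = (1 / real CARD('n)) *\<^sub>R (real CARD('n) *\<^sub>R m i) - (1 / real CARD('n)) *\<^sub>R (\<Sum>l\<in>UNIV. m l)"
      by (simp add: sum_subtractf scaleR_diff_right sum_constant_scaleR)
    also have "\<dots> = m i - (1 / real CARD('n)) *\<^sub>R (\<Sum>l\<in>UNIV. v l)"
      using N by (simp add: sm)
    finally show ?thesis by simp
  qed
  also have "norm \<dots> \<le> (1 / real CARD('n)) * (\<Sum>l\<in>UNIV. norm (m i - m l))"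
    using norm_sum[of "\<lambda>l. m i - m l" UNIV] by (simp add: divide_right_mono)
  also have "\<dots> \<le> (1 / real CARD('n)) * (\<Sum>l\<in>(UNIV::'n set). nu v)"
    by (intro mult_left_mono sum_mono) (auto simp: m_def mid_pair)
  also have "\<dots> = nu v" using N by simp
  finally show ?thesis unfolding m_def .
qed

end



lemma geo_div_sum:
  fixes c :: real and p :: nat
  assumes c0: "0 \<le> c" and c1: "c < 1" and p: "p > 0"
  shows "(\<Sum>j<n. c ^ (j div p)) \<le> real p / (1 - c)"
proof -
  have blk: "(\<Sum>j<p * q. c ^ (j div p)) = real p * (\<Sum>l<q. c ^ l)" for q
  proof (induction q)
    case 0 then show ?case by simp
  next
    case (Suc q)
    have split: "{..<p * Suc q} = {..<p * q} \<union> {p * q..<p * q + p}" by auto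
    have "(\<Sum>j\<in>{p * q..<p * q + p}. c ^ (j div p)) = (\<Sum>j\<in>{p * q..<p * q + p}. c ^ q)"
    proof (rule sum.cong)
      fix j assume "j \<in> {p * q..<p * q + p}"
      then have "j div p = q" using p by (auto intro: div_nat_eqI simp: algebra_simps)
      then show "c ^ (j div p) = c ^ q" by simp
    qed simp
    then have "(\<Sum>j\<in>{p * q..<p * q + p}. c ^ (j div p)) = real p * c ^ q" by simp
    then show ?case unfolding split
      by (subst sum.union_disjoint) (auto simp: Suc algebra_simps)
  qed
  have "(\<Sum>j<n. c ^ (j div p)) \<le> (\<Sum>j<p * n. c ^ (j div p))"
    by (rule sum_mono2) (use p c0 in auto)
  also have "\<dots> = real p * (\<Sum>l<n. c ^ l)" by (rule blk)
  also have "\<dots> \<le> real p * (1 / (1 - c))"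
  proof -
    have "(\<Sum>l<n. c ^ l) = (1 - c ^ n) / (1 - c)" using sum_gp_strict[of c n] c1 by simp
    also have "\<dots> \<le> 1 / (1 - c)" using c0 c1 by (simp add: divide_right_mono)
    finally have "(\<Sum>l<n. c ^ l) \<le> 1 / (1 - c)" .
    then show ?thesis by (rule mult_left_mono) simp
  qed
  finally show ?thesis by simp
qed

lemma shifted_sum_le:
  fixes h :: "nat \<Rightarrow> real"
  assumes h0: "\<And>j. h j \<ge> 0"
  shows "(\<Sum>t<T. if s < t then h (t - 1 - s) else 0) \<le> (\<Sum>j<T. h j)"
proof -
  have "(\<Sum>t<T. if s < t then h (t - 1 - s) else 0) = (\<Sum>t\<in>{t\<in>{..<T}. s < t}. h (t - 1 - s))"
    by (rule sum.inter_filter[symmetric]) simp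
  also have "{t\<in>{..<T}. s < t} = {Suc s..<T}" by auto
  also have "(\<Sum>t\<in>{Suc s..<T}. h (t - 1 - s)) \<le> (\<Sum>j<T. h j)"
  proof (cases "Suc s \<le> T")
    case True
    have "(\<Sum>t\<in>{Suc s..<T}. h (t - 1 - s)) = (\<Sum>t\<in>{0 + Suc s..<(T - Suc s) + Suc s}. h (t - 1 - s))"
      using True by simp
    also have "\<dots> = (\<Sum>j\<in>{0..<T - Suc s}. h j)"
      by (subst sum.shift_bounds_nat_ivl) simp
    also have "\<dots> \<le> (\<Sum>j<T. h j)"
      by (rule sum_mono2) (auto simp: h0)
    finally show ?thesis .
  next
    case False
    then show ?thesis by (simp add: sum_nonneg h0)
  qed
  finally show ?thesis .
qed

context consensus begin

definition p :: nat where "p = 2 * K"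

lemma p_pos: "p > 0" using K_pos unfolding p_def by simp

lemma nu_zero: "nu (\<lambda>i. 0::'a::real_normed_vector) = 0"
  using nu_bound[of "\<lambda>i. 0::'a" 0] nu_nonneg[of "\<lambda>i. 0::'a"] by simp

lemma nu_const: "nu (\<lambda>i. c::'a::real_normed_vector) = 0"
proof -
  have "nu (\<lambda>i. c) \<le> 0" by (rule nu_le) simp
  then show ?thesis using nu_nonneg[of "\<lambda>i. c"] by simp
qed

lemma mapp_mpow0: "mapp (mpow W 0) v = v"
proof (rule ext)
  fix x
  have "(\<Sum>j\<in>UNIV. mpow W 0 x j *\<^sub>R v j) = (\<Sum>j\<in>UNIV. if x = j then v j else 0)"
    by (rule sum.cong) simp_all
  then show "mapp (mpow W 0) v x = v x" unfolding mapp_def by simp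
qed

lemma seq_step:
  fixes X :: "nat \<Rightarrow> 'n \<Rightarrow> 'a::real_normed_vector"
  assumes rec: "\<And>t. X (Suc t) = (\<lambda>i. mapp W (X t) i + e t i)"
    and eb: "\<And>t. nu (e t) \<le> b t"
  shows "nu (X (Suc t)) \<le> nu (X t) + b t"
proof -
  have "nu (X (Suc t)) \<le> nu (mapp W (X t)) + nu (e t)" unfolding rec by (rule nu_add)
  then show ?thesis using nu_W[of "X t"] eb[of t] by linarith
qed

lemma seq_block:
  fixes X :: "nat \<Rightarrow> 'n \<Rightarrow> 'a::real_normed_vector"
  assumes rec: "\<And>t. X (Suc t) = (\<lambda>i. mapp W (X t) i + e t i)"
    and eb: "\<And>t. nu (e t) \<le> b t"
  shows "nu (X (t + p)) \<le> (1 - dc) * nu (X t) + (\<Sum>s<p. b (t + s))"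
proof -
  define Z where "Z r = mapp (mpow W r) (X t)" for r
  have dz: "nu (\<lambda>i. X (t + r) i - Z r i) \<le> (\<Sum>s<r. b (t + s))" for r
  proof (induction r)
    case 0
    have "Z 0 = X t" unfolding Z_def by (rule mapp_mpow0)
    then show ?case by (simp add: nu_zero)
  next
    case (Suc r)
    have "(\<lambda>i. X (t + Suc r) i - Z (Suc r) i) = (\<lambda>i. mapp W (\<lambda>i. X (t + r) i - Z r i) i + e (t + r) i)"
      unfolding Z_def by (auto simp: rec mapp_mmul mapp_diff)
    then have "nu (\<lambda>i. X (t + Suc r) i - Z (Suc r) i) \<le> nu (mapp W (\<lambda>i. X (t + r) i - Z r i)) + nu (e (t + r))"
      using nu_add by simp
    also have "\<dots> \<le> nu (\<lambda>i. X (t + r) i - Z r i) + b (t + r)" using nu_W eb add_mono by blast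
    also have "\<dots> \<le> (\<Sum>s<Suc r. b (t + s))" using Suc by simp
    finally show ?case .
  qed
  have "X (t + p) = (\<lambda>i. Z p i + (X (t + p) i - Z p i))" by simp
  then have "nu (X (t + p)) \<le> nu (Z p) + nu (\<lambda>i. X (t + p) i - Z p i)"
    by (metis nu_add)
  also have "\<dots> \<le> (1 - dc) * nu (X t) + (\<Sum>s<p. b (t + s))"
    using nu_Q[of "X t"] dz[of p] unfolding Z_def Q_def p_def by linarith
  finally show ?thesis .
qed

lemma seq_bound:
  fixes X :: "nat \<Rightarrow> 'n \<Rightarrow> 'a::real_normed_vector"
  assumes rec: "\<And>t. X (Suc t) = (\<lambda>i. mapp W (X t) i + e t i)"
    and eb: "\<And>t. nu (e t) \<le> b t" and b0: "\<And>t. b t \<ge> 0"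
    and X0: "nu (X 0) = 0"
  shows "nu (X t) \<le> (\<Sum>s<t. (1 - dc) ^ ((t - 1 - s) div p) * b s)"
proof (induction t rule: less_induct)
  case (less t)
  show ?case
  proof (cases "t < p")
    case True
    have "nu (X t') \<le> (\<Sum>s<t'. b s)" for t'
    proof (induction t')
      case 0 then show ?case using X0 by simp
    next
      case (Suc t') then show ?case using seq_step[of X e b t', OF rec eb] by simp
    qed
    also have "(\<Sum>s<t. b s) = (\<Sum>s<t. (1 - dc) ^ ((t - 1 - s) div p) * b s)"
    proof (rule sum.cong)
      fix s assume "s \<in> {..<t}"
      then have "(t - 1 - s) div p = 0" using True by simp
      then show "b s = (1 - dc) ^ ((t - 1 - s) div p) * b s" by simp
    qed simp
    finally show ?thesis .
  next
    case False
    define t' where "t' = t - p"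
    have tt: "t = t' + p" using False unfolding t'_def by simp
    have IH: "nu (X t') \<le> (\<Sum>s<t'. (1 - dc) ^ ((t' - 1 - s) div p) * b s)"
      using less p_pos tt by simp
    have c0: "0 \<le> 1 - dc" using dc_lt1 by simp
    have "nu (X t) \<le> (1 - dc) * nu (X t') + (\<Sum>s<p. b (t' + s))"
      unfolding tt by (rule seq_block[of X e b, OF rec eb])
    also have "\<dots> \<le> (1 - dc) * (\<Sum>s<t'. (1 - dc) ^ ((t' - 1 - s) div p) * b s) + (\<Sum>s<p. b (t' + s))"
      using IH c0 by (simp add: mult_left_mono)
    also have "(1 - dc) * (\<Sum>s<t'. (1 - dc) ^ ((t' - 1 - s) div p) * b s)
        = (\<Sum>s<t'. (1 - dc) ^ ((t - 1 - s) div p) * b s)"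
      unfolding sum_distrib_left
    proof (rule sum.cong)
      fix s assume "s \<in> {..<t'}"
      then have "t - 1 - s = (t' - 1 - s) + p" using tt by simp
      then have "(t - 1 - s) div p = Suc ((t' - 1 - s) div p)" using p_pos by simp
      then show "(1 - dc) * ((1 - dc) ^ ((t' - 1 - s) div p) * b s) = (1 - dc) ^ ((t - 1 - s) div p) * b s"
        by simp
    qed simp
    also have "(\<Sum>s<p. b (t' + s)) = (\<Sum>s\<in>{t'..<t}. (1 - dc) ^ ((t - 1 - s) div p) * b s)"
    proof -
      have "(\<Sum>s<p. b (t' + s)) = (\<Sum>s\<in>{0 + t'..<p + t'}. b s)"
        by (subst sum.shift_bounds_nat_ivl) (simp add: add.commute lessThan_atLeast0)
      also have "\<dots> = (\<Sum>s\<in>{t'..<t}. (1 - dc) ^ ((t - 1 - s) div p) * b s)"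
      proof (rule sum.cong)
        show "{0 + t'..<p + t'} = {t'..<t}" using tt by (simp add: add.commute)
      next
        fix s assume "s \<in> {t'..<t}"
        then have "(t - 1 - s) div p = 0" using tt by auto
        then show "b s = (1 - dc) ^ ((t - 1 - s) div p) * b s" by simp
      qed
      finally show ?thesis .
    qed
    also have "(\<Sum>s<t'. (1 - dc) ^ ((t - 1 - s) div p) * b s) + (\<Sum>s\<in>{t'..<t}. (1 - dc) ^ ((t - 1 - s) div p) * b s)
        = (\<Sum>s<t. (1 - dc) ^ ((t - 1 - s) div p) * b s)"
    proof -
      have u: "{..<t} = {..<t'} \<union> {t'..<t}" using tt by auto
      show ?thesis unfolding u by (rule sum.union_disjoint[symmetric]) auto
    qed
    finally show ?thesis .
  qed
qed

lemma seq_weighted: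
  fixes X :: "nat \<Rightarrow> 'n \<Rightarrow> 'a::real_normed_vector"
  assumes rec: "\<And>t. X (Suc t) = (\<lambda>i. mapp W (X t) i + e t i)"
    and eb: "\<And>t. nu (e t) \<le> b t" and b0: "\<And>t. b t \<ge> 0"
    and X0: "nu (X 0) = 0"
    and a0: "\<And>t. a t \<ge> 0" and adec: "\<And>s t. s \<le> t \<Longrightarrow> a t \<le> a s"
  shows "(\<Sum>t<T. a t * nu (X t)) \<le> (real p / dc) * (\<Sum>s<T. a s * b s)"
proof -
  let ?c = "1 - dc"
  have c0: "0 \<le> ?c" "?c < 1" using dc_lt1 dc_pos by auto
  have "(\<Sum>t<T. a t * nu (X t)) \<le> (\<Sum>t<T. a t * (\<Sum>s<t. ?c ^ ((t - 1 - s) div p) * b s))"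
    by (rule sum_mono, rule mult_left_mono[OF seq_bound[of X e b, OF rec eb b0 X0] a0])
  also have "\<dots> \<le> (\<Sum>t<T. \<Sum>s<T. if s < t then a s * (?c ^ ((t - 1 - s) div p) * b s) else 0)"
  proof (rule sum_mono)
    fix t assume t: "t \<in> {..<T}"
    have "a t * (\<Sum>s<t. ?c ^ ((t - 1 - s) div p) * b s) = (\<Sum>s<t. a t * (?c ^ ((t - 1 - s) div p) * b s))"
      by (simp add: sum_distrib_left)
    also have "\<dots> \<le> (\<Sum>s<t. a s * (?c ^ ((t - 1 - s) div p) * b s))"
      by (rule sum_mono, rule mult_right_mono) (use adec b0 c0 in auto)
    also have "\<dots> = (\<Sum>s\<in>{s\<in>{..<T}. s < t}. a s * (?c ^ ((t - 1 - s) div p) * b s))"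
    proof -
      have "{s\<in>{..<T}. s < t} = {..<t}" using t by auto
      then show ?thesis by simp
    qed
    also have "\<dots> = (\<Sum>s<T. if s < t then a s * (?c ^ ((t - 1 - s) div p) * b s) else 0)"
      by (rule sum.inter_filter) simp
    finally show "a t * (\<Sum>s<t. ?c ^ ((t - 1 - s) div p) * b s) \<le> \<dots>" .
  qed
  also have "\<dots> = (\<Sum>s<T. a s * b s * (\<Sum>t<T. if s < t then ?c ^ ((t - 1 - s) div p) else 0))"
    by (subst sum.swap) (auto simp: sum_distrib_left intro!: sum.cong)
  also have "\<dots> \<le> (\<Sum>s<T. a s * b s * (real p / dc))"
  proof (rule sum_mono, rule mult_left_mono)
    fix s
    have "(\<Sum>t<T. if s < t then ?c ^ ((t - 1 - s) div p) else 0) \<le> (\<Sum>j<T. ?c ^ (j div p))"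
      by (rule shifted_sum_le) (use c0 in simp)
    also have "\<dots> \<le> real p / (1 - ?c)" by (rule geo_div_sum) (use c0 p_pos in auto)
    finally show "(\<Sum>t<T. if s < t then ?c ^ ((t - 1 - s) div p) else 0) \<le> real p / dc" by simp
    show "0 \<le> a s * b s" using a0 b0 by simp
  qed
  also have "\<dots> = (real p / dc) * (\<Sum>s<T. a s * b s)"
    by (simp add: sum_distrib_left mult.commute)
  finally show ?thesis .
qed

end



lemma sq_jensen:
  fixes w a :: "'n::finite \<Rightarrow> real"
  assumes w0: "\<And>j. w j \<ge> 0" and w1: "(\<Sum>j\<in>UNIV. w j) = 1"
  shows "(\<Sum>j\<in>UNIV. w j * a j)\<^sup>2 \<le> (\<Sum>j\<in>UNIV. w j * (a j)\<^sup>2)"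
proof -
  define m where "m = (\<Sum>j\<in>UNIV. w j * a j)"
  have "0 \<le> (\<Sum>j\<in>UNIV. w j * (a j - m)\<^sup>2)" by (intro sum_nonneg) (simp add: w0)
  also have "\<dots> = (\<Sum>j\<in>UNIV. w j * (a j)\<^sup>2) - 2 * m * (\<Sum>j\<in>UNIV. w j * a j) + m\<^sup>2 * (\<Sum>j\<in>UNIV. w j)"
    by (simp add: power2_diff algebra_simps sum.distrib sum_subtractf sum_distrib_left sum_distrib_right)
  also have "\<dots> = (\<Sum>j\<in>UNIV. w j * (a j)\<^sup>2) - m\<^sup>2" by (simp add: w1 m_def[symmetric] power2_eq_square)
  finally show ?thesis unfolding m_def by simp
qed

lemma nonneg_orthant_closed: "closed (nonneg_orthant :: (real^'m::finite) set)"
proof -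
  have eq: "(nonneg_orthant :: (real^'m) set) = (\<Inter>k. {v::real^'m. 0 \<le> v $ k})" unfolding nonneg_orthant_def by auto
  have c: "closed {v::real^'m. 0 \<le> v $ k}" for k
    by (intro closed_Collect_le continuous_intros)
  show ?thesis unfolding eq by (rule closed_INT) (use c in blast)
qed

lemma nonneg_orthant_convex: "convex (nonneg_orthant :: (real^'m::finite) set)"
  unfolding nonneg_orthant_def convex_def by auto

lemma pos_part_in: "pos_part v \<in> nonneg_orthant"
  unfolding pos_part_def nonneg_orthant_def by simp

lemma norm_sq_vec: "(norm (x :: real^'m::finite))\<^sup>2 = (\<Sum>k\<in>UNIV. (x $ k)\<^sup>2)"
  by (subst power2_norm_eq_inner) (simp add: inner_vec_def power2_eq_square)

lemma closest_orthant: "closest_point nonneg_orthant v = pos_part v"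
proof -
  have "\<forall>z\<in>nonneg_orthant. dist v (pos_part v) \<le> dist v z"
  proof
    fix z :: "real^'a" assume z: "z \<in> nonneg_orthant"
    have "(norm (v - pos_part v))\<^sup>2 \<le> (norm (v - z))\<^sup>2"
      unfolding norm_sq_vec
    proof (rule sum_mono)
      fix k
      have "0 \<le> z $ k" using z unfolding nonneg_orthant_def by simp
      show "((v - pos_part v) $ k)\<^sup>2 \<le> ((v - z) $ k)\<^sup>2"
      proof (cases "v $ k \<ge> 0")
        case True then show ?thesis unfolding pos_part_def by simp
      next
        case False
        have "0 \<le> z $ k * (z $ k - 2 * v $ k)" using False \<open>0 \<le> z $ k\<close> by simp
        then show ?thesis using False unfolding pos_part_def by (simp add: power2_eq_square algebra_simps)
      qed
    qed
    then show "dist v (pos_part v) \<le> dist v z"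
      unfolding dist_norm by (rule power2_le_imp_le) simp
  qed
  then show ?thesis
    by (intro closest_point_unique[symmetric] nonneg_orthant_convex nonneg_orthant_closed pos_part_in)
qed

lemma closest_nonexp:
  fixes S :: "'a::euclidean_space set"
  assumes "convex S" "closed S" "z \<in> S"
  shows "norm (closest_point S w - z) \<le> norm (w - z)"
proof -
  have "dist (closest_point S w) (closest_point S z) \<le> dist w z"
    using closest_point_lipschitz[OF assms(1,2)] assms(3) by blast
  then show ?thesis using closest_point_self[OF assms(3)] by (simp add: dist_norm)
qed

context consensus begin

lemma mix_sq:
  fixes u :: "'n \<Rightarrow> 'a::real_normed_vector"
  shows "(\<Sum>i\<in>UNIV. (norm ((\<Sum>j\<in>UNIV. W i j *\<^sub>R u j) - z))\<^sup>2) \<le> (\<Sum>j\<in>UNIV. (norm (u j - z))\<^sup>2)"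
proof -
  have "(norm ((\<Sum>j\<in>UNIV. W i j *\<^sub>R u j) - z))\<^sup>2 \<le> (\<Sum>j\<in>UNIV. W i j * (norm (u j - z))\<^sup>2)" for i
  proof -
    have "(\<Sum>j\<in>UNIV. W i j *\<^sub>R u j) - z = (\<Sum>j\<in>UNIV. W i j *\<^sub>R (u j - z))"
      by (simp add: scaleR_diff_right sum_subtractf scaleR_sum_left[symmetric] W_rows)
    then have "norm ((\<Sum>j\<in>UNIV. W i j *\<^sub>R u j) - z) \<le> (\<Sum>j\<in>UNIV. W i j * norm (u j - z))"
      using norm_sum[of "\<lambda>j. W i j *\<^sub>R (u j - z)" UNIV] by (simp add: W_nonneg)
    then have "(norm ((\<Sum>j\<in>UNIV. W i j *\<^sub>R u j) - z))\<^sup>2 \<le> (\<Sum>j\<in>UNIV. W i j * norm (u j - z))\<^sup>2"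
      by (rule power_mono) simp
    also have "\<dots> \<le> (\<Sum>j\<in>UNIV. W i j * (norm (u j - z))\<^sup>2)"
      by (rule sq_jensen) (simp_all add: W_nonneg W_rows)
    finally show ?thesis .
  qed
  then have "(\<Sum>i\<in>UNIV. (norm ((\<Sum>j\<in>UNIV. W i j *\<^sub>R u j) - z))\<^sup>2)
      \<le> (\<Sum>i\<in>UNIV. \<Sum>j\<in>UNIV. W i j * (norm (u j - z))\<^sup>2)" by (rule sum_mono)
  also have "\<dots> = (\<Sum>j\<in>UNIV. (norm (u j - z))\<^sup>2)"
    by (subst sum.swap) (simp add: sum_distrib_right[symmetric] W_cols)
  finally show ?thesis .
qed

end



locale base = consensus W E for W :: "'n::finite \<Rightarrow> 'n \<Rightarrow> real" and E +
  fixes df :: "'n \<Rightarrow> real^'d::finite \<Rightarrow> real^'d" and f :: "'n \<Rightarrow> real^'d \<Rightarrow> real"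
    and g :: "'m::finite \<Rightarrow> real^'d \<Rightarrow> real" and dg :: "'m \<Rightarrow> real^'d \<Rightarrow> real^'d"
    and R L :: real
  assumes df_subgrad: "\<And>i x y. x \<in> cball 0 R \<Longrightarrow> y \<in> cball 0 R \<Longrightarrow> f i y \<ge> f i x + df i x \<bullet> (y - x)"
    and dg_subgrad: "\<And>k x y. x \<in> cball 0 R \<Longrightarrow> y \<in> cball 0 R \<Longrightarrow> g k y \<ge> g k x + dg k x \<bullet> (y - x)"
    and df_bound: "\<And>i x. x \<in> cball 0 R \<Longrightarrow> norm (df i x) \<le> L"
    and dg_bound: "\<And>k x. x \<in> cball 0 R \<Longrightarrow> norm (dg k x) \<le> L"
    and R_nonneg: "R \<ge> 0"
begin

lemma zero_ball: "(0::real^'d) \<in> cball 0 R" using R_nonneg by simp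

lemma L_nonneg: "L \<ge> 0"
  using df_bound[OF zero_ball, of undefined] norm_ge_zero order_trans by blast

lemma ip_le: "\<bar>u \<bullet> v\<bar> \<le> norm u * norm v" by (rule Cauchy_Schwarz_ineq2)

lemma f_lower:
  assumes "x \<in> cball 0 R" "y \<in> cball 0 R"
  shows "f i y \<ge> f i x - L * norm (y - x)"
proof -
  have "\<bar>df i x \<bullet> (y - x)\<bar> \<le> L * norm (y - x)"
    using ip_le[of "df i x" "y - x"] df_bound[OF assms(1)] by (meson mult_right_mono norm_ge_zero order_trans)
  then show ?thesis using df_subgrad[OF assms, of i] by linarith
qed

lemma g_lower:
  assumes "x \<in> cball 0 R" "y \<in> cball 0 R"
  shows "g k y \<ge> g k x - L * norm (y - x)"
proof -
  have "\<bar>dg k x \<bullet> (y - x)\<bar> \<le> L * norm (y - x)"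
    using ip_le[of "dg k x" "y - x"] dg_bound[OF assms(1)] by (meson mult_right_mono norm_ge_zero order_trans)
  then show ?thesis using dg_subgrad[OF assms, of k] by linarith
qed

definition G0 :: real where "G0 = (\<Sum>k\<in>UNIV. \<bar>g k 0\<bar>) + L * R"

lemma g_bound: "x \<in> cball 0 R \<Longrightarrow> \<bar>g k x\<bar> \<le> G0"
proof -
  assume x: "x \<in> cball 0 R"
  have n: "norm (x - 0) \<le> R" "norm (0 - x) \<le> R" using x by auto
  have "g k x \<ge> g k 0 - L * norm (x - 0)" by (rule g_lower[OF zero_ball x])
  moreover have "g k 0 \<ge> g k x - L * norm (0 - x)" by (rule g_lower[OF x zero_ball])
  moreover have "L * norm (x - 0) \<le> L * R" "L * norm (0 - x) \<le> L * R"
    using n L_nonneg by (simp_all add: mult_left_mono)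
  moreover have "\<bar>g k 0\<bar> \<le> (\<Sum>k\<in>UNIV. \<bar>g k 0\<bar>)" by (rule member_le_sum) auto
  ultimately show ?thesis unfolding G0_def by linarith
qed

lemma G0_nonneg: "G0 \<ge> 0" using g_bound[OF zero_ball, of undefined] by linarith

definition c1 :: real where "c1 = 2 * L\<^sup>2 + 2 * (real CARD('m))\<^sup>2 * G0\<^sup>2"
definition K3 :: real where "K3 = L * real CARD('n) * (4 * real p / dc + 1)"
definition C1 :: real where "C1 = 8 * L * R + 1"
definition C2 :: real where "C2 = 2 * (c1 + K3 * L) * R + 1"

end

locale alg = base W E df f g dg R L
  for W :: "'n::finite \<Rightarrow> 'n \<Rightarrow> real" and E
    and df :: "'n \<Rightarrow> real^'d::finite \<Rightarrow> real^'d" and f :: "'n \<Rightarrow> real^'d \<Rightarrow> real"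
    and g :: "'m::finite \<Rightarrow> real^'d \<Rightarrow> real" and dg :: "'m \<Rightarrow> real^'d \<Rightarrow> real^'d"
    and R L :: real +
  fixes \<eta> :: real
  assumes eta_pos: "\<eta> > 0" and eta_step: "\<And>t. \<eta> * stepsize R t \<le> 1 / 2"
begin

abbreviation a where "a \<equiv> stepsize R"

definition X :: "nat \<Rightarrow> 'n \<Rightarrow> real^'d" where "X t = fst (alg_state df dg g W R \<eta> a t)"
definition Lam :: "nat \<Rightarrow> 'n \<Rightarrow> real^'m" where "Lam t = snd (alg_state df dg g W R \<eta> a t)"
definition gx where "gx t i = df i (X t i) + (\<Sum>k\<in>UNIV. (Lam t i $ k) *\<^sub>R dg k (X t i))"
definition gl where "gl t i = gvec g (X t i) - \<eta> *\<^sub>R Lam t i"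

lemma X0: "X 0 = (\<lambda>i. 0)" and Lam0: "Lam 0 = (\<lambda>i. 0)"
  by (simp_all add: X_def Lam_def)

lemma X_Suc: "X (Suc t) = (\<lambda>i. closest_point (cball 0 R) (\<Sum>j\<in>UNIV. W i j *\<^sub>R (X t j - a t *\<^sub>R gx t j)))"
  by (simp add: X_def Lam_def gx_def Let_def)

lemma Lam_Suc: "Lam (Suc t) = (\<lambda>i. pos_part (\<Sum>j\<in>UNIV. W i j *\<^sub>R (Lam t j + a t *\<^sub>R gl t j)))"
  by (simp add: X_def Lam_def gl_def Let_def closest_orthant)

lemma a_nonneg: "a t \<ge> 0" unfolding stepsize_def using R_nonneg by simp

lemma a_le_R: "a t \<le> R"
proof -
  have "R / sqrt (real t + 1) \<le> R / 1"
    using R_nonneg by (intro divide_left_mono) auto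
  then show ?thesis unfolding stepsize_def by simp
qed

lemma a_dec: "s \<le> t \<Longrightarrow> a t \<le> a s"
  unfolding stepsize_def using R_nonneg by (intro divide_left_mono) auto

lemma a_eta: "\<eta> * a t \<le> 1 / 2" using eta_step by simp

lemma X_ball: "X t i \<in> cball 0 R"
proof (cases t)
  case 0 then show ?thesis using zero_ball by (simp add: X0)
next
  case (Suc s)
  have "closest_point (cball 0 R) (\<Sum>j\<in>UNIV. W i j *\<^sub>R (X s j - a s *\<^sub>R gx s j)) \<in> cball 0 R"
    using zero_ball by (intro closest_point_in_set) auto
  then show ?thesis unfolding Suc X_Suc by simp
qed

lemma Lam_nonneg: "0 \<le> Lam t i $ k"
proof (cases t)
  case 0 then show ?thesis by (simp add: Lam0)
next
  case (Suc s) then show ?thesis by (simp add: Lam_Suc pos_part_def)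
qed

definition B :: real where "B = G0 / \<eta>"

lemma B_nonneg: "B \<ge> 0" unfolding B_def using G0_nonneg eta_pos by simp

lemma Lam_le: "Lam t i $ k \<le> B"
proof (induction t arbitrary: i)
  case 0 then show ?case by (simp add: Lam0 B_nonneg)
next
  case (Suc t)
  have gj: "(Lam t j + a t *\<^sub>R gl t j) $ k \<le> B" for j
  proof -
    have "(Lam t j + a t *\<^sub>R gl t j) $ k = (1 - \<eta> * a t) * Lam t j $ k + a t * g k (X t j)"
      by (simp add: gl_def gvec_def algebra_simps)
    also have "\<dots> \<le> (1 - \<eta> * a t) * B + a t * G0"
    proof (rule add_mono)
      show "(1 - \<eta> * a t) * Lam t j $ k \<le> (1 - \<eta> * a t) * B"
        using a_eta[of t] Suc.IH by (intro mult_left_mono) auto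
      show "a t * g k (X t j) \<le> a t * G0"
        using g_bound[OF X_ball, of k t j] a_nonneg by (intro mult_left_mono) auto
    qed
    also have "\<dots> = B" unfolding B_def using eta_pos by (simp add: field_simps)
    finally show ?thesis .
  qed
  have "(\<Sum>j\<in>UNIV. W i j *\<^sub>R (Lam t j + a t *\<^sub>R gl t j)) $ k
      = (\<Sum>j\<in>UNIV. W i j * (Lam t j + a t *\<^sub>R gl t j) $ k)" by simp
  also have "\<dots> \<le> (\<Sum>j\<in>UNIV. W i j * B)"
  proof (rule sum_mono)
    fix j
    show "W i j * (Lam t j + a t *\<^sub>R gl t j) $ k \<le> W i j * B"
      by (rule mult_left_mono[OF gj W_nonneg])
  qed
  also have "\<dots> = B" by (simp add: sum_distrib_right[symmetric] W_rows)
  finally show ?case using B_nonneg by (simp add: Lam_Suc pos_part_def)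
qed

definition Ls where "Ls t i = (\<Sum>k\<in>UNIV. Lam t i $ k)"

lemma Ls_nonneg: "Ls t i \<ge> 0" unfolding Ls_def by (intro sum_nonneg) (simp add: Lam_nonneg)

lemma Ls_le: "Ls t i \<le> real CARD('m) * B"
proof -
  have "Ls t i \<le> (\<Sum>k\<in>(UNIV::'m set). B)" unfolding Ls_def by (rule sum_mono) (simp add: Lam_le)
  then show ?thesis by simp
qed

lemma norm_Lam: "norm (Lam t i) \<le> Ls t i"
  using norm_le_l1_cart[of "Lam t i"] Lam_nonneg unfolding Ls_def by simp

lemma gx_norm: "norm (gx t i) \<le> L * (1 + Ls t i)"
proof -
  have "norm (\<Sum>k\<in>UNIV. (Lam t i $ k) *\<^sub>R dg k (X t i)) \<le> (\<Sum>k\<in>UNIV. Lam t i $ k * L)"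
    by (rule order_trans[OF norm_sum], rule sum_mono)
      (simp add: Lam_nonneg dg_bound[OF X_ball] mult_left_mono)
  then have "norm (\<Sum>k\<in>UNIV. (Lam t i $ k) *\<^sub>R dg k (X t i)) \<le> L * Ls t i"
    unfolding Ls_def by (simp add: sum_distrib_left mult.commute)
  moreover have "norm (df i (X t i)) \<le> L" by (rule df_bound[OF X_ball])
  ultimately show ?thesis unfolding gx_def
    using norm_triangle_ineq[of "df i (X t i)" "\<Sum>k\<in>UNIV. (Lam t i $ k) *\<^sub>R dg k (X t i)"]
    by (simp add: distrib_left)
qed

lemma gl_norm: "norm (gl t i) \<le> real CARD('m) * G0 + \<eta> * Ls t i"
proof -
  have "norm (gvec g (X t i)) \<le> (\<Sum>k\<in>UNIV. \<bar>gvec g (X t i) $ k\<bar>)" by (rule norm_le_l1_cart)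
  also have "\<dots> \<le> (\<Sum>k\<in>(UNIV::'m set). G0)"
    by (rule sum_mono) (simp add: gvec_def g_bound[OF X_ball])
  finally have a1: "norm (gvec g (X t i)) \<le> real CARD('m) * G0" by simp
  have a2: "norm (\<eta> *\<^sub>R Lam t i) \<le> \<eta> * Ls t i"
    using norm_Lam[of t i] eta_pos by (simp add: mult_left_mono)
  show ?thesis unfolding gl_def using a1 a2 norm_triangle_ineq4[of "gvec g (X t i)" "\<eta> *\<^sub>R Lam t i"] by linarith
qed

definition c2 :: real where "c2 = 2 * L\<^sup>2 * real CARD('m) * B + 2 * \<eta> * real CARD('m) * G0"

lemma grad_sq: "(norm (gx t i))\<^sup>2 + (norm (gl t i))\<^sup>2 \<le> c1 + c2 * Ls t i"
proof -
  let ?s = "Ls t i" and ?M = "real CARD('m)"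
  have s0: "?s \<ge> 0" by (rule Ls_nonneg)
  have sM: "?s \<le> ?M * B" by (rule Ls_le)
  have ss: "?s\<^sup>2 \<le> ?M * B * ?s" using s0 sM by (simp add: power2_eq_square mult_right_mono)
  have "(norm (gx t i))\<^sup>2 \<le> (L * (1 + ?s))\<^sup>2" using gx_norm by (rule power_mono) simp
  also have "\<dots> \<le> 2 * L\<^sup>2 + 2 * L\<^sup>2 * ?s\<^sup>2"
  proof -
    have "(1 + ?s)\<^sup>2 \<le> 2 + 2 * ?s\<^sup>2"
      using zero_le_power2[of "1 - ?s"] by (simp add: power2_eq_square algebra_simps)
    then have "L\<^sup>2 * (1 + ?s)\<^sup>2 \<le> L\<^sup>2 * (2 + 2 * ?s\<^sup>2)" by (rule mult_left_mono) simp
    moreover have "(L * (1 + ?s))\<^sup>2 = L\<^sup>2 * (1 + ?s)\<^sup>2" by (simp add: power_mult_distrib)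
    ultimately show ?thesis by (simp add: algebra_simps)
  qed
  also have "\<dots> \<le> 2 * L\<^sup>2 + 2 * L\<^sup>2 * (?M * B * ?s)" using ss by (simp add: mult_left_mono)
  finally have h1: "(norm (gx t i))\<^sup>2 \<le> 2 * L\<^sup>2 + 2 * L\<^sup>2 * (?M * B * ?s)" .
  have "(norm (gl t i))\<^sup>2 \<le> (?M * G0 + \<eta> * ?s)\<^sup>2" using gl_norm by (rule power_mono) simp
  also have "\<dots> \<le> 2 * (?M * G0)\<^sup>2 + 2 * (\<eta> * ?s)\<^sup>2"
    using zero_le_power2[of "?M * G0 - \<eta> * ?s"] by (simp add: power2_eq_square algebra_simps)
  also have "(\<eta> * ?s)\<^sup>2 = \<eta>\<^sup>2 * ?s\<^sup>2" by (simp add: power_mult_distrib)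
  also have "\<eta>\<^sup>2 * ?s\<^sup>2 \<le> \<eta>\<^sup>2 * (?M * B * ?s)" using ss by (simp add: mult_left_mono)
  also have "\<eta>\<^sup>2 * (?M * B * ?s) = \<eta> * ?M * G0 * ?s" unfolding B_def using eta_pos by (simp add: power2_eq_square field_simps)
  finally have h2: "(norm (gl t i))\<^sup>2 \<le> 2 * (?M * G0)\<^sup>2 + 2 * (\<eta> * ?M * G0 * ?s)" by simp
  show ?thesis using h1 h2 unfolding c1_def c2_def by (simp add: power_mult_distrib algebra_simps)
qed

end



lemma norm_sq_minus:
  fixes u v :: "'a::real_inner"
  shows "(norm (u - c *\<^sub>R v))\<^sup>2 = (norm u)\<^sup>2 - 2 * c * (v \<bullet> u) + c\<^sup>2 * (norm v)\<^sup>2"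
  unfolding power2_norm_eq_inner by (simp add: inner_diff_left inner_diff_right inner_commute algebra_simps power2_eq_square)

lemma norm_sq_plus:
  fixes u v :: "'a::real_inner"
  shows "(norm (u + c *\<^sub>R v))\<^sup>2 = (norm u)\<^sup>2 + 2 * c * (v \<bullet> u) + c\<^sup>2 * (norm v)\<^sup>2"
  unfolding power2_norm_eq_inner by (simp add: inner_add_left inner_add_right inner_commute algebra_simps power2_eq_square)

lemma inner_vec_sum: "(u :: real^'m::finite) \<bullet> v = (\<Sum>k\<in>UNIV. u $ k * v $ k)"
  by (simp add: inner_vec_def)

context alg begin

definition Dv where "Dv x \<mu> t = (\<Sum>i\<in>UNIV. (norm (X t i - x))\<^sup>2) + (\<Sum>i\<in>UNIV. (norm (Lam t i - \<mu>))\<^sup>2)"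

definition Phi where "Phi x \<mu> t i = f i (X t i) - f i x - Lam t i \<bullet> gvec g x + \<mu> \<bullet> gvec g (X t i)
   + \<eta> / 2 * (norm (Lam t i))\<^sup>2 - \<eta> / 2 * (norm \<mu>)\<^sup>2"

lemma primal_step:
  assumes x: "x \<in> cball 0 R"
  shows "(\<Sum>i\<in>UNIV. (norm (X (Suc t) i - x))\<^sup>2) \<le> (\<Sum>i\<in>UNIV. (norm ((X t i - a t *\<^sub>R gx t i) - x))\<^sup>2)"
proof -
  have "(\<Sum>i\<in>UNIV. (norm (X (Suc t) i - x))\<^sup>2)
      \<le> (\<Sum>i\<in>UNIV. (norm ((\<Sum>j\<in>UNIV. W i j *\<^sub>R (X t j - a t *\<^sub>R gx t j)) - x))\<^sup>2)"
    unfolding X_Suc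
    by (intro sum_mono power_mono closest_nonexp x) auto
  also have "\<dots> \<le> (\<Sum>i\<in>UNIV. (norm ((X t i - a t *\<^sub>R gx t i) - x))\<^sup>2)"
    by (rule mix_sq)
  finally show ?thesis .
qed

lemma dual_step:
  assumes m: "\<mu> \<in> nonneg_orthant"
  shows "(\<Sum>i\<in>UNIV. (norm (Lam (Suc t) i - \<mu>))\<^sup>2) \<le> (\<Sum>i\<in>UNIV. (norm ((Lam t i + a t *\<^sub>R gl t i) - \<mu>))\<^sup>2)"
proof -
  have "(\<Sum>i\<in>UNIV. (norm (Lam (Suc t) i - \<mu>))\<^sup>2)
      \<le> (\<Sum>i\<in>UNIV. (norm ((\<Sum>j\<in>UNIV. W i j *\<^sub>R (Lam t j + a t *\<^sub>R gl t j)) - \<mu>))\<^sup>2)"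
    unfolding Lam_Suc closest_orthant[symmetric]
    by (intro sum_mono power_mono closest_nonexp m nonneg_orthant_convex nonneg_orthant_closed) auto
  also have "\<dots> \<le> (\<Sum>i\<in>UNIV. (norm ((Lam t i + a t *\<^sub>R gl t i) - \<mu>))\<^sup>2)"
    by (rule mix_sq)
  finally show ?thesis .
qed

lemma lam_g: "(lm::real^'m) \<bullet> gvec g y = (\<Sum>k\<in>UNIV. lm $ k * g k y)"
  by (simp add: inner_vec_sum gvec_def)

lemma subgrad_primal:
  assumes x: "x \<in> cball 0 R"
  shows "gx t i \<bullet> (X t i - x) \<ge> f i (X t i) - f i x + Lam t i \<bullet> gvec g (X t i) - Lam t i \<bullet> gvec g x"
proof -
  have h1: "df i (X t i) \<bullet> (X t i - x) \<ge> f i (X t i) - f i x"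
    using df_subgrad[of "X t i" x i, OF X_ball x] by (simp add: inner_diff_right)
  have h2: "(\<Sum>k\<in>UNIV. (Lam t i $ k) *\<^sub>R dg k (X t i)) \<bullet> (X t i - x)
      \<ge> (\<Sum>k\<in>UNIV. Lam t i $ k * (g k (X t i) - g k x))"
    unfolding inner_sum_left
  proof (rule sum_mono)
    fix k
    have "dg k (X t i) \<bullet> (X t i - x) \<ge> g k (X t i) - g k x"
      using dg_subgrad[of "X t i" x k, OF X_ball x] by (simp add: inner_diff_right)
    then show "Lam t i $ k * (g k (X t i) - g k x) \<le> (Lam t i $ k *\<^sub>R dg k (X t i)) \<bullet> (X t i - x)"
      using Lam_nonneg[of t i k] by (simp add: mult_left_mono)
  qed
  have h3: "(\<Sum>k\<in>UNIV. Lam t i $ k * (g k (X t i) - g k x)) = Lam t i \<bullet> gvec g (X t i) - Lam t i \<bullet> gvec g x"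
    by (simp add: lam_g sum_subtractf algebra_simps)
  show ?thesis using h1 h2 h3 unfolding gx_def inner_add_left by linarith
qed

lemma dual_ineq:
  "gl t i \<bullet> (Lam t i - \<mu>) \<le> Lam t i \<bullet> gvec g (X t i) - \<mu> \<bullet> gvec g (X t i)
     - \<eta> / 2 * (norm (Lam t i))\<^sup>2 + \<eta> / 2 * (norm \<mu>)\<^sup>2"
proof -
  let ?L = "Lam t i"
  have e: "gl t i \<bullet> (?L - \<mu>) = ?L \<bullet> gvec g (X t i) - \<mu> \<bullet> gvec g (X t i) - \<eta> * (?L \<bullet> ?L) + \<eta> * (?L \<bullet> \<mu>)"
    unfolding gl_def by (simp add: inner_diff_left inner_diff_right inner_commute algebra_simps)
  have "0 \<le> (norm (?L - \<mu>))\<^sup>2" by simp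
  then have "?L \<bullet> \<mu> \<le> ((norm ?L)\<^sup>2 + (norm \<mu>)\<^sup>2) / 2"
    by (simp add: power2_norm_eq_inner inner_diff_left inner_diff_right inner_commute)
  then have "\<eta> * (?L \<bullet> \<mu>) \<le> \<eta> * (((norm ?L)\<^sup>2 + (norm \<mu>)\<^sup>2) / 2)"
    using eta_pos by (simp add: mult_left_mono)
  moreover have "?L \<bullet> ?L = (norm ?L)\<^sup>2" by (simp add: power2_norm_eq_inner)
  ultimately show ?thesis unfolding e by (simp add: algebra_simps)
qed

lemma descent:
  assumes x: "x \<in> cball 0 R" and m: "\<mu> \<in> nonneg_orthant"
  shows "Dv x \<mu> (Suc t) \<le> Dv x \<mu> t - 2 * a t * (\<Sum>i\<in>UNIV. Phi x \<mu> t i)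
      + (a t)\<^sup>2 * (\<Sum>i\<in>UNIV. (norm (gx t i))\<^sup>2 + (norm (gl t i))\<^sup>2)"
proof -
  have p: "(norm ((X t i - a t *\<^sub>R gx t i) - x))\<^sup>2 \<le> (norm (X t i - x))\<^sup>2
      - 2 * a t * (f i (X t i) - f i x + Lam t i \<bullet> gvec g (X t i) - Lam t i \<bullet> gvec g x)
      + (a t)\<^sup>2 * (norm (gx t i))\<^sup>2" for i
  proof -
    have e: "(X t i - a t *\<^sub>R gx t i) - x = (X t i - x) - a t *\<^sub>R gx t i" by simp
    have "(norm ((X t i - a t *\<^sub>R gx t i) - x))\<^sup>2 = (norm (X t i - x))\<^sup>2 - 2 * a t * (gx t i \<bullet> (X t i - x))
        + (a t)\<^sup>2 * (norm (gx t i))\<^sup>2" unfolding e norm_sq_minus ..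
    moreover have "a t * (f i (X t i) - f i x + Lam t i \<bullet> gvec g (X t i) - Lam t i \<bullet> gvec g x)
        \<le> a t * (gx t i \<bullet> (X t i - x))"
      using subgrad_primal[OF x] a_nonneg by (simp add: mult_left_mono)
    ultimately show ?thesis by linarith
  qed
  have d: "(norm ((Lam t i + a t *\<^sub>R gl t i) - \<mu>))\<^sup>2 \<le> (norm (Lam t i - \<mu>))\<^sup>2
      + 2 * a t * (Lam t i \<bullet> gvec g (X t i) - \<mu> \<bullet> gvec g (X t i)
     - \<eta> / 2 * (norm (Lam t i))\<^sup>2 + \<eta> / 2 * (norm \<mu>)\<^sup>2)
      + (a t)\<^sup>2 * (norm (gl t i))\<^sup>2" for i
  proof -
    have e: "(Lam t i + a t *\<^sub>R gl t i) - \<mu> = (Lam t i - \<mu>) + a t *\<^sub>R gl t i" by simp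
    have "(norm ((Lam t i + a t *\<^sub>R gl t i) - \<mu>))\<^sup>2 = (norm (Lam t i - \<mu>))\<^sup>2 + 2 * a t * (gl t i \<bullet> (Lam t i - \<mu>))
        + (a t)\<^sup>2 * (norm (gl t i))\<^sup>2" unfolding e norm_sq_plus ..
    moreover have "a t * (gl t i \<bullet> (Lam t i - \<mu>)) \<le> a t * (Lam t i \<bullet> gvec g (X t i) - \<mu> \<bullet> gvec g (X t i)
     - \<eta> / 2 * (norm (Lam t i))\<^sup>2 + \<eta> / 2 * (norm \<mu>)\<^sup>2)"
      using dual_ineq a_nonneg by (simp add: mult_left_mono)
    ultimately show ?thesis by linarith
  qed
  have "Dv x \<mu> (Suc t) \<le> (\<Sum>i\<in>UNIV. (norm ((X t i - a t *\<^sub>R gx t i) - x))\<^sup>2)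
      + (\<Sum>i\<in>UNIV. (norm ((Lam t i + a t *\<^sub>R gl t i) - \<mu>))\<^sup>2)"
    unfolding Dv_def using primal_step[OF x] dual_step[OF m] by (rule add_mono)
  also have "\<dots> \<le> (\<Sum>i\<in>UNIV. (norm (X t i - x))\<^sup>2
      - 2 * a t * (f i (X t i) - f i x + Lam t i \<bullet> gvec g (X t i) - Lam t i \<bullet> gvec g x)
      + (a t)\<^sup>2 * (norm (gx t i))\<^sup>2)
     + (\<Sum>i\<in>UNIV. (norm (Lam t i - \<mu>))\<^sup>2
      + 2 * a t * (Lam t i \<bullet> gvec g (X t i) - \<mu> \<bullet> gvec g (X t i)
     - \<eta> / 2 * (norm (Lam t i))\<^sup>2 + \<eta> / 2 * (norm \<mu>)\<^sup>2)
      + (a t)\<^sup>2 * (norm (gl t i))\<^sup>2)"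
    by (intro add_mono sum_mono p d)
  also have "\<dots> = Dv x \<mu> t - 2 * a t * (\<Sum>i\<in>UNIV. Phi x \<mu> t i)
      + (a t)\<^sup>2 * (\<Sum>i\<in>UNIV. (norm (gx t i))\<^sup>2 + (norm (gl t i))\<^sup>2)"
    unfolding Dv_def Phi_def
    by (simp add: sum.distrib sum_subtractf sum_distrib_left algebra_simps)
  finally show ?thesis .
qed

lemma telescope:
  assumes x: "x \<in> cball 0 R" and m: "\<mu> \<in> nonneg_orthant"
  shows "Dv x \<mu> T \<le> Dv x \<mu> 0 - 2 * (\<Sum>t<T. a t * (\<Sum>i\<in>UNIV. Phi x \<mu> t i))
      + (\<Sum>t<T. (a t)\<^sup>2 * (\<Sum>i\<in>UNIV. (norm (gx t i))\<^sup>2 + (norm (gl t i))\<^sup>2))"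
proof (induction T)
  case 0 then show ?case by simp
next
  case (Suc T)
  then show ?case using descent[OF x m, of T] by (simp add: algebra_simps)
qed

lemma core:
  assumes x: "x \<in> cball 0 R" and m: "\<mu> \<in> nonneg_orthant"
  shows "2 * (\<Sum>t<T. a t * (\<Sum>i\<in>UNIV. Phi x \<mu> t i))
      \<le> real CARD('n) * (R\<^sup>2 + (norm \<mu>)\<^sup>2) + (\<Sum>t<T. (a t)\<^sup>2 * (\<Sum>i\<in>UNIV. c1 + c2 * Ls t i))"
proof -
  have D0: "Dv x \<mu> 0 \<le> real CARD('n) * (R\<^sup>2 + (norm \<mu>)\<^sup>2)"
  proof -
    have "(norm x)\<^sup>2 \<le> R\<^sup>2" using x by (simp add: power_mono)
    then show ?thesis unfolding Dv_def X0 Lam0 by (simp add: algebra_simps)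
  qed
  have DT: "Dv x \<mu> T \<ge> 0" unfolding Dv_def by (simp add: sum_nonneg)
  have G: "(\<Sum>t<T. (a t)\<^sup>2 * (\<Sum>i\<in>UNIV. (norm (gx t i))\<^sup>2 + (norm (gl t i))\<^sup>2))
      \<le> (\<Sum>t<T. (a t)\<^sup>2 * (\<Sum>i\<in>UNIV. c1 + c2 * Ls t i))"
    by (intro sum_mono mult_left_mono grad_sq) simp_all
  show ?thesis using telescope[OF x m, of T] D0 DT G by linarith
qed

end



lemma harm_le_ln: "n \<ge> 1 \<Longrightarrow> harm n \<le> 1 + ln (real n)"
  using euler_mascheroni_sequence_decreasing[of 1 n] by (simp add: harm_def)

context alg begin

definition S where "S T = (\<Sum>t<T. a t)"
definition xh where "xh i T = (1 / S T) *\<^sub>R (\<Sum>t<T. a t *\<^sub>R X t i)"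
definition vv where "vv T = (1 / real CARD('n)) *\<^sub>R (\<Sum>i\<in>UNIV. gvec g (xh i T))"

lemma viol_eq: "viol df dg g W R \<eta> T = (norm (pos_part (vv T)))\<^sup>2"
  unfolding viol_def vv_def xh_def xhat_def S_def X_def ..

lemma S_nonneg: "S T \<ge> 0" unfolding S_def by (intro sum_nonneg a_nonneg)

lemma sqrt_S:
  shows "S T \<ge> R * sqrt (real T)"
proof (cases "T = 0")
  case True then show ?thesis by (simp add: S_def)
next
  case False
  have "a t \<ge> R / sqrt (real T)" if "t < T" for t
    unfolding stepsize_def using that R_nonneg by (intro divide_left_mono) auto
  then have "(\<Sum>t<T. R / sqrt (real T)) \<le> S T" unfolding S_def by (intro sum_mono) auto
  moreover have "(\<Sum>t<T. R / sqrt (real T)) = R * sqrt (real T)"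
    using False by (simp add: field_simps real_sqrt_mult[symmetric])
  ultimately show ?thesis by simp
qed

lemma sumsq: "T \<ge> 1 \<Longrightarrow> (\<Sum>t<T. (a t)\<^sup>2) \<le> R\<^sup>2 * (1 + ln (real T))"
proof -
  assume T: "T \<ge> 1"
  have "(\<Sum>t<T. (a t)\<^sup>2) = R\<^sup>2 * harm T"
    unfolding harm_altdef stepsize_def
    by (simp add: sum_distrib_left power_divide field_simps)
  also have "\<dots> \<le> R\<^sup>2 * (1 + ln (real T))" using harm_le_ln[OF T] by (simp add: mult_left_mono)
  finally show ?thesis .
qed

lemma xh_ball: "S T > 0 \<Longrightarrow> xh i T \<in> cball 0 R"
proof -
  assume S: "S T > 0"
  have "norm (\<Sum>t<T. a t *\<^sub>R X t i) \<le> (\<Sum>t<T. a t * R)"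
    by (rule order_trans[OF norm_sum], rule sum_mono)
      (use X_ball a_nonneg in \<open>auto intro: mult_left_mono\<close>)
  also have "\<dots> = S T * R" unfolding S_def by (simp add: sum_distrib_right)
  finally show ?thesis unfolding xh_def using S by (simp add: divide_le_eq mult.commute)
qed

lemma jensen_g: "S T > 0 \<Longrightarrow> S T * g k (xh i T) \<le> (\<Sum>t<T. a t * g k (X t i))"
proof -
  assume S: "S T > 0"
  let ?z = "xh i T"
  have z: "?z \<in> cball 0 R" by (rule xh_ball[OF S])
  have "(\<Sum>t<T. a t * (g k ?z + dg k ?z \<bullet> (X t i - ?z))) \<le> (\<Sum>t<T. a t * g k (X t i))"
    by (intro sum_mono mult_left_mono dg_subgrad[OF z X_ball] a_nonneg)
  moreover have "(\<Sum>t<T. a t * (g k ?z + dg k ?z \<bullet> (X t i - ?z)))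
      = S T * g k ?z + dg k ?z \<bullet> ((\<Sum>t<T. a t *\<^sub>R X t i) - S T *\<^sub>R ?z)"
    unfolding S_def by (simp add: algebra_simps sum.distrib sum_distrib_right inner_sum_right inner_diff_right
        scaleR_sum_left sum_subtractf)
  moreover have "(\<Sum>t<T. a t *\<^sub>R X t i) - S T *\<^sub>R ?z = 0"
    unfolding xh_def using S by simp
  ultimately show ?thesis by simp
qed

lemma jensen_mu:
  assumes m: "\<mu> \<in> nonneg_orthant" and S: "S T > 0"
  shows "S T * real CARD('n) * (\<mu> \<bullet> vv T) \<le> (\<Sum>t<T. a t * (\<Sum>i\<in>UNIV. \<mu> \<bullet> gvec g (X t i)))"
proof -
  have m0: "0 \<le> \<mu> $ k" for k using m unfolding nonneg_orthant_def by simp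
  have "S T * real CARD('n) * (\<mu> \<bullet> vv T) = (\<Sum>i\<in>UNIV. \<Sum>k\<in>UNIV. \<mu> $ k * (S T * g k (xh i T)))"
    unfolding vv_def by (simp add: inner_sum_right lam_g sum_distrib_left algebra_simps)
  also have "\<dots> \<le> (\<Sum>i\<in>UNIV. \<Sum>k\<in>UNIV. \<mu> $ k * (\<Sum>t<T. a t * g k (X t i)))"
    by (intro sum_mono mult_left_mono jensen_g[OF S] m0)
  also have "\<dots> = (\<Sum>t<T. a t * (\<Sum>i\<in>UNIV. \<mu> \<bullet> gvec g (X t i)))"
  proof -
    have "(\<Sum>i\<in>UNIV. \<Sum>k\<in>UNIV. \<mu> $ k * (\<Sum>t<T. a t * g k (X t i)))
        = (\<Sum>i\<in>UNIV. \<Sum>k\<in>UNIV. \<Sum>t<T. a t * (\<mu> $ k * g k (X t i)))"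
      by (simp add: sum_distrib_left algebra_simps)
    also have "\<dots> = (\<Sum>i\<in>UNIV. \<Sum>t<T. \<Sum>k\<in>UNIV. a t * (\<mu> $ k * g k (X t i)))"
      by (rule sum.cong[OF refl], rule sum.swap)
    also have "\<dots> = (\<Sum>t<T. \<Sum>i\<in>UNIV. \<Sum>k\<in>UNIV. a t * (\<mu> $ k * g k (X t i)))"
      by (rule sum.swap)
    also have "\<dots> = (\<Sum>t<T. a t * (\<Sum>i\<in>UNIV. \<mu> \<bullet> gvec g (X t i)))"
      by (simp add: lam_g sum_distrib_left)
    finally show ?thesis .
  qed
  finally show ?thesis .
qed

definition Ff where "Ff x t = (\<Sum>i\<in>UNIV. f i (X t i) - f i x)"
definition Gx where "Gx x t = (\<Sum>i\<in>UNIV. - (Lam t i \<bullet> gvec g x))"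

lemma core2:
  assumes x: "x \<in> cball 0 R" and m: "\<mu> \<in> nonneg_orthant" and S: "S T > 0"
  shows "2 * (\<Sum>t<T. a t * Ff x t) + 2 * (\<Sum>t<T. a t * Gx x t) + 2 * (S T * real CARD('n) * (\<mu> \<bullet> vv T))
       - S T * real CARD('n) * \<eta> * (norm \<mu>)\<^sup>2
      \<le> real CARD('n) * (R\<^sup>2 + (norm \<mu>)\<^sup>2) + (\<Sum>t<T. (a t)\<^sup>2 * (\<Sum>i\<in>UNIV. c1 + c2 * Ls t i))"
proof -
  have ph: "(\<Sum>i\<in>UNIV. Phi x \<mu> t i) = Ff x t + Gx x t + (\<Sum>i\<in>UNIV. \<mu> \<bullet> gvec g (X t i))
      + (\<Sum>i\<in>UNIV. \<eta> / 2 * (norm (Lam t i))\<^sup>2) - real CARD('n) * (\<eta> / 2 * (norm \<mu>)\<^sup>2)" for t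
    unfolding Phi_def Ff_def Gx_def by (simp add: sum.distrib sum_subtractf sum_negf)
  have "(\<Sum>t<T. a t * (\<Sum>i\<in>UNIV. Phi x \<mu> t i))
      = (\<Sum>t<T. a t * Ff x t) + (\<Sum>t<T. a t * Gx x t) + (\<Sum>t<T. a t * (\<Sum>i\<in>UNIV. \<mu> \<bullet> gvec g (X t i)))
        + (\<Sum>t<T. a t * (\<Sum>i\<in>UNIV. \<eta> / 2 * (norm (Lam t i))\<^sup>2)) - S T * (real CARD('n) * (\<eta> / 2 * (norm \<mu>)\<^sup>2))"
  proof -
    let ?k = "real CARD('n) * (\<eta> / 2 * (norm \<mu>)\<^sup>2)"
    have "(\<Sum>t<T. a t * (\<Sum>i\<in>UNIV. Phi x \<mu> t i)) = (\<Sum>t<T. a t * Ff x t + a t * Gx x t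
        + a t * (\<Sum>i\<in>UNIV. \<mu> \<bullet> gvec g (X t i)) + a t * (\<Sum>i\<in>UNIV. \<eta> / 2 * (norm (Lam t i))\<^sup>2) - a t * ?k)"
      unfolding ph by (simp add: algebra_simps)
    also have "\<dots> = (\<Sum>t<T. a t * Ff x t) + (\<Sum>t<T. a t * Gx x t) + (\<Sum>t<T. a t * (\<Sum>i\<in>UNIV. \<mu> \<bullet> gvec g (X t i)))
        + (\<Sum>t<T. a t * (\<Sum>i\<in>UNIV. \<eta> / 2 * (norm (Lam t i))\<^sup>2)) - (\<Sum>t<T. a t * ?k)"
      by (simp only: sum.distrib sum_subtractf)
    also have "(\<Sum>t<T. a t * ?k) = S T * ?k" unfolding S_def by (simp add: sum_distrib_right)
    finally show ?thesis .
  qed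
  moreover have "(\<Sum>t<T. a t * (\<Sum>i\<in>UNIV. \<eta> / 2 * (norm (Lam t i))\<^sup>2)) \<ge> 0"
    using eta_pos by (intro sum_nonneg mult_nonneg_nonneg a_nonneg) auto
  moreover note jensen_mu[OF m S] core[OF x m, of T]
  ultimately show ?thesis by (simp add: algebra_simps)
qed

lemma pos_part_inner: "pos_part v \<bullet> v = (norm (pos_part v))\<^sup>2"
  unfolding norm_sq_vec inner_vec_sum pos_part_def
  by (rule sum.cong) (auto simp: power2_eq_square max_def)

lemma core3:
  assumes x: "x \<in> cball 0 R" and S: "S T > 0"
  shows "2 * (\<Sum>t<T. a t * Ff x t) + 2 * (\<Sum>t<T. a t * Gx x t)
       + S T * real CARD('n) * viol df dg g W R \<eta> T / \<eta>
      \<le> real CARD('n) * R\<^sup>2 + real CARD('n) * viol df dg g W R \<eta> T / \<eta>\<^sup>2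
        + (\<Sum>t<T. (a t)\<^sup>2 * (\<Sum>i\<in>UNIV. c1 + c2 * Ls t i))"
proof -
  define P where "P = viol df dg g W R \<eta> T"
  define \<mu> where "\<mu> = (1 / \<eta>) *\<^sub>R pos_part (vv T)"
  have m: "\<mu> \<in> nonneg_orthant"
    unfolding \<mu>_def nonneg_orthant_def pos_part_def using eta_pos by simp
  have i1: "\<mu> \<bullet> vv T = P / \<eta>"
    unfolding \<mu>_def P_def viol_eq using pos_part_inner[of "vv T"] by simp
  have i2: "(norm \<mu>)\<^sup>2 = P / \<eta>\<^sup>2"
    unfolding \<mu>_def P_def viol_eq using eta_pos by (simp add: power_mult_distrib power_divide)
  have "2 * (S T * real CARD('n) * (\<mu> \<bullet> vv T)) - S T * real CARD('n) * \<eta> * (norm \<mu>)\<^sup>2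
      = S T * real CARD('n) * P / \<eta>"
    unfolding i1 i2 using eta_pos by (simp add: power2_eq_square field_simps)
  then show ?thesis using core2[OF x m S] unfolding P_def[symmetric] i2 by (simp add: algebra_simps)
qed

end



lemma ev_const:
  fixes K c :: real
  assumes c: "c > 0"
  shows "eventually (\<lambda>T. K \<le> c * sqrt (real T)) sequentially"
proof (rule eventually_sequentiallyI[of "nat \<lceil>(K / c)\<^sup>2\<rceil>"])
  fix T assume T: "nat \<lceil>(K / c)\<^sup>2\<rceil> \<le> T"
  then have "(K / c)\<^sup>2 \<le> real T" by linarith
  then have "sqrt ((K / c)\<^sup>2) \<le> sqrt (real T)" by (rule real_sqrt_le_mono)
  then have "K / c \<le> sqrt (real T)" by (metis real_sqrt_abs abs_ge_self order_trans)
  then show "K \<le> c * sqrt (real T)" using c by (simp add: divide_le_eq mult.commute)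
qed

lemma ev_ln: "eventually (\<lambda>T. c \<le> ln (real T)) sequentially"
proof (rule eventually_sequentiallyI[of "nat \<lceil>exp c\<rceil>"])
  fix T assume T: "nat \<lceil>exp c\<rceil> \<le> T"
  then have "exp c \<le> real T" by linarith
  moreover have "exp c > 0" by simp
  ultimately have Tp: "real T > 0" by linarith
  have "ln (exp c) \<le> ln (real T)" using \<open>exp c \<le> real T\<close> Tp by (subst ln_le_cancel_iff) auto
  then show "c \<le> ln (real T)" by simp
qed

lemma ln_sqrt_bound:
  fixes T :: nat and e :: real
  assumes T: "T \<ge> 1" and e: "e > 0"
  shows "ln (real T) \<le> 2 * (e * sqrt (real T) - 1 - ln e)"
proof -
  have s: "sqrt (real T) > 0" using T by simp
  have "ln (e * sqrt (real T)) \<le> e * sqrt (real T) - 1" using e s by (intro ln_le_minus_one) simp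
  moreover have "ln (e * sqrt (real T)) = ln e + ln (real T) / 2"
    using e s T by (simp add: ln_mult ln_sqrt)
  ultimately show ?thesis by simp
qed

lemma ev_small:
  fixes A B c :: real
  assumes c: "c > 0"
  shows "eventually (\<lambda>T. A + B * ln (real T) \<le> c * sqrt (real T)) sequentially"
proof -
  define e where "e = c / (4 * \<bar>B\<bar> + 1)"
  have e: "e > 0" unfolding e_def using c by (simp add: add_nonneg_pos)
  have be: "2 * \<bar>B\<bar> * e \<le> c / 2"
  proof -
    have "2 * \<bar>B\<bar> * e = c * (2 * \<bar>B\<bar> / (4 * \<bar>B\<bar> + 1))" unfolding e_def by (simp add: field_simps)
    also have "\<dots> \<le> c * (1 / 2)"
      using c by (intro mult_left_mono) (auto simp: field_simps)
    finally show ?thesis by simp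
  qed
  have e1: "eventually (\<lambda>T. \<bar>A\<bar> + 2 * \<bar>B\<bar> * (- 1 - ln e) \<le> (c / 2) * sqrt (real T)) sequentially"
    by (rule ev_const) (use c in simp)
  have e2: "eventually (\<lambda>T::nat. T \<ge> 1) sequentially" by (rule eventually_ge_at_top)
  from e1 e2 show ?thesis
  proof eventually_elim
    case (elim T)
    have l0: "ln (real T) \<ge> 0" using elim(2) by simp
    have "A + B * ln (real T) \<le> \<bar>A\<bar> + \<bar>B\<bar> * ln (real T)"
      using l0 by (smt (verit) abs_ge_self abs_mult abs_of_nonneg mult_right_mono)
    also have "\<dots> \<le> \<bar>A\<bar> + \<bar>B\<bar> * (2 * (e * sqrt (real T) - 1 - ln e))"
      using ln_sqrt_bound[OF elim(2) e] by (intro add_left_mono mult_left_mono) auto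
    also have "\<dots> = \<bar>A\<bar> + 2 * \<bar>B\<bar> * (- 1 - ln e) + (2 * \<bar>B\<bar> * e) * sqrt (real T)"
      by (simp add: algebra_simps)
    also have "\<dots> \<le> (c / 2) * sqrt (real T) + (c / 2) * sqrt (real T)"
      using elim(1) be by (intro add_mono mult_right_mono) auto
    finally show ?case by simp
  qed
qed

lemma ev_sqrt:
  fixes R c :: real
  assumes R: "R > 0"
  shows "eventually (\<lambda>T. c \<le> R * sqrt (real T)) sequentially"
  by (rule ev_const[OF R])

context alg begin

lemma Gx_nonneg: "x \<in> feas_set g \<Longrightarrow> Gx x t \<ge> 0"
proof -
  assume x: "x \<in> feas_set g"
  have "Lam t i \<bullet> gvec g x \<le> 0" for i
    unfolding lam_g using x Lam_nonneg unfolding feas_set_def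
    by (intro sum_nonpos) (simp add: mult_nonneg_nonpos)
  then show ?thesis unfolding Gx_def by (simp add: sum_nonneg)
qed

lemma Ff_lower: "x \<in> cball 0 R \<Longrightarrow> Ff x t \<ge> - (real CARD('n) * (2 * L * R))"
proof -
  assume x: "x \<in> cball 0 R"
  have "f i (X t i) - f i x \<ge> - (2 * L * R)" for i
  proof -
    have "norm (X t i - x) \<le> 2 * R"
      using X_ball[of t i] x norm_triangle_ineq4[of "X t i" x] by simp
    then have "L * norm (X t i - x) \<le> L * (2 * R)" using L_nonneg by (rule mult_left_mono)
    then show ?thesis using f_lower[of x "X t i" i, OF x X_ball] by linarith
  qed
  then have "(\<Sum>i\<in>(UNIV::'n set). - (2 * L * R)) \<le> Ff x t" unfolding Ff_def by (intro sum_mono) auto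
  then show ?thesis by simp
qed

lemma c2_nonneg: "c2 \<ge> 0"
  unfolding c2_def using B_nonneg eta_pos G0_nonneg by simp

lemma c1_nonneg: "c1 \<ge> 0" unfolding c1_def by simp

lemma grad_total:
  "(\<Sum>t<T. (a t)\<^sup>2 * (\<Sum>i\<in>UNIV. c1 + c2 * Ls t i))
     \<le> real CARD('n) * (c1 + c2 * (real CARD('m) * B)) * (\<Sum>t<T. (a t)\<^sup>2)"
proof -
  have "(\<Sum>i\<in>(UNIV::'n set). c1 + c2 * Ls t i) \<le> (\<Sum>i\<in>(UNIV::'n set). c1 + c2 * (real CARD('m) * B))" for t
    by (intro sum_mono add_left_mono mult_left_mono Ls_le c2_nonneg)
  then have "(\<Sum>t<T. (a t)\<^sup>2 * (\<Sum>i\<in>UNIV. c1 + c2 * Ls t i))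
      \<le> (\<Sum>t<T. (a t)\<^sup>2 * (real CARD('n) * (c1 + c2 * (real CARD('m) * B))))"
    by (intro sum_mono mult_left_mono) auto
  also have "\<dots> = real CARD('n) * (c1 + c2 * (real CARD('m) * B)) * (\<Sum>t<T. (a t)\<^sup>2)"
    by (simp add: sum_distrib_right mult.commute)
  finally show ?thesis .
qed

lemma viol_nonneg: "viol df dg g W R \<eta> T \<ge> 0" unfolding viol_def by simp

lemma part1:
  assumes R: "R > 0" and x: "x \<in> feas_set g" "x \<in> cball 0 R"
  shows "eventually (\<lambda>T. viol df dg g W R \<eta> T \<le> C1 * \<eta>) sequentially"
proof -
  define c3 where "c3 = c1 + c2 * (real CARD('m) * B)"
  have c3: "c3 \<ge> 0" unfolding c3_def using c1_nonneg c2_nonneg B_nonneg by simp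
  have e1: "eventually (\<lambda>T. 2 / \<eta> \<le> R * sqrt (real T)) sequentially" by (rule ev_sqrt[OF R])
  have e2: "eventually (\<lambda>T. (R\<^sup>2 + c3 * R\<^sup>2) + (c3 * R\<^sup>2) * ln (real T) \<le> (R / 2) * sqrt (real T)) sequentially"
    by (rule ev_small) (use R in simp)
  have e3: "eventually (\<lambda>T::nat. T \<ge> 1) sequentially" by (rule eventually_ge_at_top)
  from e1 e2 e3 show ?thesis
  proof eventually_elim
    case (elim T)
    let ?N = "real CARD('n)" and ?P = "viol df dg g W R \<eta> T"
    have N: "?N > 0" by simp
    have Sg: "S T \<ge> R * sqrt (real T)" by (rule sqrt_S)
    have "R * sqrt (real T) > 0" using R elim(3) by simp
    then have S: "S T > 0" using Sg by linarith
    have P0: "?P \<ge> 0" by (rule viol_nonneg)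
    have h: "2 * (\<Sum>t<T. a t * Ff x t) + 2 * (\<Sum>t<T. a t * Gx x t) + S T * ?N * ?P / \<eta>
      \<le> ?N * R\<^sup>2 + ?N * ?P / \<eta>\<^sup>2 + ?N * c3 * (\<Sum>t<T. (a t)\<^sup>2)"
      using core3[OF x(2) S] grad_total[of T] unfolding c3_def by linarith
    have f: "(\<Sum>t<T. a t * Ff x t) \<ge> - (?N * (2 * L * R)) * S T"
    proof -
      have "(\<Sum>t<T. a t * (- (?N * (2 * L * R)))) \<le> (\<Sum>t<T. a t * Ff x t)"
        by (intro sum_mono mult_left_mono Ff_lower x a_nonneg)
      moreover have "(\<Sum>t<T. a t * (- (?N * (2 * L * R)))) = - (?N * (2 * L * R)) * S T"
        unfolding S_def by (simp add: sum_distrib_right sum_negf mult.commute)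
      ultimately show ?thesis by simp
    qed
    have gg: "(\<Sum>t<T. a t * Gx x t) \<ge> 0"
      by (intro sum_nonneg mult_nonneg_nonneg a_nonneg Gx_nonneg x)
    have sq: "c3 * (\<Sum>t<T. (a t)\<^sup>2) \<le> c3 * (R\<^sup>2 * (1 + ln (real T)))"
      using sumsq[OF elim(3)] c3 by (rule mult_left_mono)
    have q1: "R\<^sup>2 + c3 * (\<Sum>t<T. (a t)\<^sup>2) \<le> S T / 2"
      using sq elim(2) Sg by (simp add: algebra_simps)
    have q2: "?P / \<eta>\<^sup>2 \<le> S T * ?P / (2 * \<eta>)"
    proof -
      have "?P / \<eta>\<^sup>2 = (2 / \<eta>) * ?P / (2 * \<eta>)" using eta_pos by (simp add: power2_eq_square field_simps)
      also have "\<dots> \<le> S T * ?P / (2 * \<eta>)"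
        using elim(1) Sg P0 eta_pos by (intro divide_right_mono mult_right_mono) auto
      finally show ?thesis .
    qed
    define Y where "Y = S T * ?P / \<eta>"
    define Z where "Z = ?P / \<eta>\<^sup>2"
    define Q where "Q = (\<Sum>t<T. (a t)\<^sup>2)"
    have h': "2 * (\<Sum>t<T. a t * Ff x t) + 2 * (\<Sum>t<T. a t * Gx x t) + ?N * Y
        \<le> ?N * R\<^sup>2 + ?N * Z + ?N * (c3 * Q)"
    proof -
      have "S T * ?N * ?P / \<eta> = ?N * Y" "?N * ?P / \<eta>\<^sup>2 = ?N * Z" "?N * c3 * Q = ?N * (c3 * Q)"
        unfolding Y_def Z_def by simp_all
      then show ?thesis using h unfolding Q_def by simp
    qed
    have f': "(\<Sum>t<T. a t * Ff x t) \<ge> - (?N * (2 * L * R * S T))"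
      using f by (simp add: algebra_simps)
    have "?N * Y \<le> ?N * R\<^sup>2 + ?N * Z + ?N * (c3 * Q) + 2 * (?N * (2 * L * R * S T))"
      using h' f' gg by linarith
    also have "\<dots> = ?N * (R\<^sup>2 + Z + c3 * Q + 4 * L * R * S T)" by (simp add: algebra_simps)
    finally have y1: "Y \<le> R\<^sup>2 + Z + c3 * Q + 4 * L * R * S T" using N by simp
    have q1': "R\<^sup>2 + c3 * Q \<le> S T / 2" using q1 unfolding Q_def .
    have q2': "Z \<le> Y / 2" using q2 unfolding Y_def Z_def by simp
    have "Y \<le> S T * (8 * L * R + 1)" using y1 q1' q2' by (simp add: algebra_simps)
    then have "S T * (?P / \<eta>) \<le> S T * (8 * L * R + 1)" unfolding Y_def by simp
    then have "?P / \<eta> \<le> 8 * L * R + 1" using S by (rule mult_left_le_imp_le)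
    then show ?case unfolding C1_def using eta_pos by (simp add: divide_le_eq mult.commute)
  qed
qed

end



context alg begin

lemma global_min:
  assumes xs: "xs \<in> feas_set g" "xs \<in> cball 0 R"
    and opt: "\<forall>x\<in>feas_set g. avg_obj f xs \<le> avg_obj f x"
    and strict: "\<forall>k. g k xs < 0"
    and y: "y \<in> cball 0 R"
  shows "(\<Sum>i\<in>UNIV. f i xs) \<le> (\<Sum>i\<in>UNIV. f i y)"
proof -
  define \<delta> where "\<delta> = Min (range (\<lambda>k. - g k xs))"
  have \<delta>le: "\<delta> \<le> - g k xs" for k unfolding \<delta>_def by (rule Min_le) auto
  have \<delta>pos: "\<delta> > 0"
  proof -
    have "\<delta> \<in> range (\<lambda>k. - g k xs)" unfolding \<delta>_def by (rule Min_in) auto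
    then show ?thesis using strict by auto
  qed
  define \<epsilon> where "\<epsilon> = \<delta> / (2 * L * R + \<delta>)"
  have LR: "L * R \<ge> 0" using L_nonneg R_nonneg by simp
  have \<epsilon>0: "\<epsilon> > 0" and \<epsilon>1: "\<epsilon> \<le> 1" unfolding \<epsilon>_def using \<delta>pos LR by (auto simp: field_simps)
  define z where "z = (1 - \<epsilon>) *\<^sub>R xs + \<epsilon> *\<^sub>R y"
  have zb: "z \<in> cball 0 R"
    unfolding z_def using convex_cball[of "0::real^'d" R] xs(2) y \<epsilon>0 \<epsilon>1
    by (simp add: convex_def)
  have zd: "z - xs = \<epsilon> *\<^sub>R (y - xs)" unfolding z_def by (simp add: algebra_simps)
  have nz: "norm (xs - z) \<le> \<epsilon> * (2 * R)"
  proof -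
    have "norm (y - xs) \<le> 2 * R" using xs(2) y norm_triangle_ineq4[of y xs] by simp
    then have "\<epsilon> * norm (y - xs) \<le> \<epsilon> * (2 * R)" using \<epsilon>0 by (simp add: mult_left_mono)
    moreover have "norm (xs - z) = \<epsilon> * norm (y - xs)"
      using zd \<epsilon>0 by (metis norm_minus_commute norm_scaleR abs_of_pos)
    ultimately show ?thesis by simp
  qed
  have zf: "z \<in> feas_set g"
    unfolding feas_set_def
  proof (intro allI CollectI)
    fix k
    have "g k xs \<ge> g k z - L * norm (xs - z)" by (rule g_lower[OF zb xs(2)])
    moreover have "L * norm (xs - z) \<le> L * (\<epsilon> * (2 * R))" using nz L_nonneg by (rule mult_left_mono)
    moreover have "L * (\<epsilon> * (2 * R)) \<le> \<delta>"
    proof -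
      have "L * (\<epsilon> * (2 * R)) = \<delta> * (2 * L * R) / (2 * L * R + \<delta>)" unfolding \<epsilon>_def by (simp add: field_simps)
      also have "\<dots> \<le> \<delta>" using \<delta>pos LR by (simp add: divide_le_eq field_simps)
      finally show ?thesis .
    qed
    ultimately show "g k z \<le> 0" using \<delta>le[of k] by linarith
  qed
  have "avg_obj f xs \<le> avg_obj f z" using opt zf by blast
  then have s1: "(\<Sum>i\<in>UNIV. f i xs) \<le> (\<Sum>i\<in>UNIV. f i z)" unfolding avg_obj_def by (simp add: divide_le_cancel)
  have s2: "f i z \<le> (1 - \<epsilon>) * f i xs + \<epsilon> * f i y" for i
  proof -
    have a1: "f i xs \<ge> f i z + df i z \<bullet> (xs - z)" by (rule df_subgrad[OF zb xs(2)])
    have a2: "f i y \<ge> f i z + df i z \<bullet> (y - z)" by (rule df_subgrad[OF zb y])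
    have "(1 - \<epsilon>) * (df i z \<bullet> (xs - z)) + \<epsilon> * (df i z \<bullet> (y - z)) = df i z \<bullet> ((1 - \<epsilon>) *\<^sub>R (xs - z) + \<epsilon> *\<^sub>R (y - z))"
      by (simp add: inner_add_right)
    also have "(1 - \<epsilon>) *\<^sub>R (xs - z) + \<epsilon> *\<^sub>R (y - z) = 0" unfolding z_def by (simp add: algebra_simps)
    finally have "(1 - \<epsilon>) * (df i z \<bullet> (xs - z)) + \<epsilon> * (df i z \<bullet> (y - z)) = 0" by simp
    moreover have "(1 - \<epsilon>) * f i xs \<ge> (1 - \<epsilon>) * (f i z + df i z \<bullet> (xs - z))" using a1 \<epsilon>1 by (simp add: mult_left_mono)
    moreover have "\<epsilon> * f i y \<ge> \<epsilon> * (f i z + df i z \<bullet> (y - z))" using a2 \<epsilon>0 by (simp add: mult_left_mono)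
    ultimately show ?thesis by (simp add: algebra_simps)
  qed
  have "(\<Sum>i\<in>UNIV. f i xs) \<le> (\<Sum>i\<in>UNIV. (1 - \<epsilon>) * f i xs + \<epsilon> * f i y)"
    using s1 order_trans sum_mono s2 by (metis (no_types, lifting))
  also have "\<dots> = (1 - \<epsilon>) * (\<Sum>i\<in>UNIV. f i xs) + \<epsilon> * (\<Sum>i\<in>UNIV. f i y)"
    by (simp add: sum.distrib sum_distrib_left)
  finally have "\<epsilon> * (\<Sum>i\<in>UNIV. f i xs) \<le> \<epsilon> * (\<Sum>i\<in>UNIV. f i y)" by (simp add: algebra_simps)
  then show ?thesis using \<epsilon>0 by simp
qed

definition En where "En t = (\<Sum>j\<in>UNIV. norm (gx t j))"

definition err where "err t = (\<lambda>i. X (Suc t) i - mapp W (X t) i)"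

lemma X_rec: "X (Suc t) = (\<lambda>i. mapp W (X t) i + err t i)"
  unfolding err_def by simp

lemma W_le1: "W i j \<le> 1"
proof -
  have "W i j \<le> (\<Sum>j\<in>UNIV. W i j)" by (rule member_le_sum) (auto simp: W_nonneg)
  then show ?thesis by (simp add: W_rows)
qed

lemma err_norm: "norm (err t i) \<le> a t * En t"
proof -
  define u where "u = (\<Sum>j\<in>UNIV. W i j *\<^sub>R X t j)"
  have ub: "u \<in> cball 0 R"
  proof -
    have "norm u \<le> (\<Sum>j\<in>UNIV. W i j * R)" unfolding u_def
      by (rule order_trans[OF norm_sum], rule sum_mono)
        (use X_ball W_nonneg in \<open>auto intro: mult_left_mono\<close>)
    also have "\<dots> = R" by (simp add: sum_distrib_right[symmetric] W_rows)
    finally show ?thesis by simp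
  qed
  have w: "(\<Sum>j\<in>UNIV. W i j *\<^sub>R (X t j - a t *\<^sub>R gx t j)) - u = - (\<Sum>j\<in>UNIV. (W i j * a t) *\<^sub>R gx t j)"
    unfolding u_def by (simp add: scaleR_diff_right sum_subtractf algebra_simps)
  have "norm (err t i) \<le> norm ((\<Sum>j\<in>UNIV. W i j *\<^sub>R (X t j - a t *\<^sub>R gx t j)) - u)"
    unfolding err_def X_Suc mapp_def u_def[symmetric]
    by (rule closest_nonexp[OF convex_cball closed_cball ub])
  also have "\<dots> \<le> (\<Sum>j\<in>UNIV. W i j * a t * norm (gx t j))"
    unfolding w norm_minus_cancel
    by (rule order_trans[OF norm_sum]) (simp add: W_nonneg a_nonneg)
  also have "\<dots> \<le> (\<Sum>j\<in>UNIV. a t * norm (gx t j))"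
  proof (rule sum_mono)
    fix j
    have "W i j * (a t * norm (gx t j)) \<le> 1 * (a t * norm (gx t j))"
      by (rule mult_right_mono[OF W_le1]) (simp add: a_nonneg)
    then show "W i j * a t * norm (gx t j) \<le> a t * norm (gx t j)" by (simp add: mult.assoc)
  qed
  also have "\<dots> = a t * En t" unfolding En_def by (simp add: sum_distrib_left)
  finally show ?thesis .
qed

lemma En_nonneg: "En t \<ge> 0" unfolding En_def by (simp add: sum_nonneg)

lemma nu_err: "nu (err t) \<le> 2 * (a t * En t)"
  by (rule nu_bound) (rule err_norm)

lemma cons_sum: "(\<Sum>t<T. a t * nu (X t)) \<le> (real p / dc) * (\<Sum>s<T. a s * (2 * (a s * En s)))"
proof (rule seq_weighted[of X err "\<lambda>t. 2 * (a t * En t)", OF X_rec nu_err])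
  show "\<And>t. 0 \<le> 2 * (a t * En t)" using a_nonneg En_nonneg by simp
  show "nu (X 0) = 0" unfolding X0 by (rule nu_const)
  show "\<And>t. 0 \<le> a t" by (rule a_nonneg)
  show "\<And>s t. s \<le> t \<Longrightarrow> a t \<le> a s" by (rule a_dec)
qed


lemma Ff_upper: "x \<in> cball 0 R \<Longrightarrow> Ff x t \<le> real CARD('n) * (2 * L * R)"
proof -
  assume x: "x \<in> cball 0 R"
  have "f i (X t i) - f i x \<le> 2 * L * R" for i
  proof -
    have "norm (x - X t i) \<le> 2 * R"
      using X_ball[of t i] x norm_triangle_ineq4[of x "X t i"] by simp
    then have "L * norm (x - X t i) \<le> L * (2 * R)" using L_nonneg by (rule mult_left_mono)
    then show ?thesis using f_lower[of "X t i" x i, OF X_ball x] by linarith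
  qed
  then have "Ff x t \<le> (\<Sum>i\<in>(UNIV::'n set). 2 * L * R)" unfolding Ff_def by (intro sum_mono) auto
  then show ?thesis by simp
qed

lemma pairing:
  assumes xs: "xs \<in> feas_set g" "xs \<in> cball 0 R"
    and opt: "\<forall>x\<in>feas_set g. avg_obj f xs \<le> avg_obj f x"
    and strict: "\<forall>k. g k xs < 0"
  shows "Ff xs t + Ff xs (Suc t) \<ge> - (2 * L * real CARD('n) * nu (X t)) - L * real CARD('n) * (a t * En t)"
proof -
  let ?N = "real CARD('n)"
  define xb where "xb = (1 / ?N) *\<^sub>R (\<Sum>l\<in>UNIV. X t l)"
  define z where "z i = (1/2) *\<^sub>R (X t i + X (Suc t) i)" for i
  have xbb: "xb \<in> cball 0 R"
  proof -
    have "norm (\<Sum>l\<in>UNIV. X t l) \<le> (\<Sum>l\<in>(UNIV::'n set). R)"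
      by (rule order_trans[OF norm_sum], rule sum_mono) (use X_ball in auto)
    then show ?thesis unfolding xb_def by (simp add: divide_le_eq mult.commute)
  qed
  have zb: "z i \<in> cball 0 R" for i
  proof -
    have "norm (X t i + X (Suc t) i) \<le> R + R"
      using norm_triangle_ineq[of "X t i" "X (Suc t) i"] X_ball[of t i] X_ball[of "Suc t" i] by simp
    then show ?thesis unfolding z_def by simp
  qed
  have zx: "norm (z i - xb) \<le> nu (X t) + a t * En t / 2" for i
  proof -
    have "z i - xb = ((1/2) *\<^sub>R (X t i + mapp W (X t) i) - (1 / ?N) *\<^sub>R (\<Sum>l\<in>UNIV. X t l)) + (1/2) *\<^sub>R err t i"
      unfolding z_def xb_def err_def by (simp add: algebra_simps)
    then have "norm (z i - xb) \<le> norm ((1/2) *\<^sub>R (X t i + mapp W (X t) i) - (1 / ?N) *\<^sub>R (\<Sum>l\<in>UNIV. X t l)) + norm ((1/2) *\<^sub>R err t i)"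
      by (metis norm_triangle_ineq)
    also have "\<dots> \<le> nu (X t) + a t * En t / 2"
      using mid_bound[of "X t" i] err_norm[of t i] by simp
    finally show ?thesis .
  qed
  have pair: "f i (X t i) + f i (X (Suc t) i) \<ge> 2 * f i (z i)" for i
  proof -
    have a1: "f i (X t i) \<ge> f i (z i) + df i (z i) \<bullet> (X t i - z i)" by (rule df_subgrad[OF zb X_ball])
    have a2: "f i (X (Suc t) i) \<ge> f i (z i) + df i (z i) \<bullet> (X (Suc t) i - z i)" by (rule df_subgrad[OF zb X_ball])
    have "df i (z i) \<bullet> (X t i - z i) + df i (z i) \<bullet> (X (Suc t) i - z i) = df i (z i) \<bullet> ((X t i - z i) + (X (Suc t) i - z i))"
      by (simp only: inner_add_right)
    also have "(X t i - z i) + (X (Suc t) i - z i) = 0"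
    proof -
      have "(2::real) *\<^sub>R z i = X t i + X (Suc t) i" unfolding z_def by simp
      then show ?thesis by (simp add: scaleR_2 algebra_simps)
    qed
    finally show ?thesis using a1 a2 by simp
  qed
  have zl: "f i (z i) \<ge> f i xb - L * (nu (X t) + a t * En t / 2)" for i
  proof -
    have "L * norm (z i - xb) \<le> L * (nu (X t) + a t * En t / 2)" using zx L_nonneg by (rule mult_left_mono)
    then show ?thesis using f_lower[of xb "z i" i, OF xbb zb] by linarith
  qed
  have gm: "(\<Sum>i\<in>UNIV. f i xs) \<le> (\<Sum>i\<in>UNIV. f i xb)" by (rule global_min[OF xs opt strict xbb])
  have "(\<Sum>i\<in>UNIV. 2 * f i xb - 2 * L * (nu (X t) + a t * En t / 2)) \<le> (\<Sum>i\<in>UNIV. f i (X t i) + f i (X (Suc t) i))"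
  proof (rule sum_mono)
    fix i
    show "2 * f i xb - 2 * L * (nu (X t) + a t * En t / 2) \<le> f i (X t i) + f i (X (Suc t) i)"
      using pair[of i] zl[of i] by linarith
  qed
  then have "2 * (\<Sum>i\<in>UNIV. f i xb) - ?N * (2 * L * (nu (X t) + a t * En t / 2))
       \<le> (\<Sum>i\<in>UNIV. f i (X t i)) + (\<Sum>i\<in>UNIV. f i (X (Suc t) i))"
    by (simp add: sum_subtractf sum.distrib sum_distrib_left)
  moreover have "Ff xs t + Ff xs (Suc t) = (\<Sum>i\<in>UNIV. f i (X t i)) + (\<Sum>i\<in>UNIV. f i (X (Suc t) i)) - 2 * (\<Sum>i\<in>UNIV. f i xs)"
    unfolding Ff_def by (simp add: sum_subtractf)
  ultimately show ?thesis using gm by (simp add: algebra_simps)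
qed

lemma weight_identity:
  "2 * (\<Sum>t<Suc T. a t * F t) = (\<Sum>t<T. a t * (F t + F (Suc t))) + a 0 * F 0 + a T * F T
     + (\<Sum>t<T. (a (Suc t) - a t) * F (Suc t))"
  by (induction T) (simp_all add: algebra_simps)

lemma weight_bound:
  assumes F: "\<And>t. \<bar>F t\<bar> \<le> F0"
  shows "a 0 * F 0 + a T * F T + (\<Sum>t<T. (a (Suc t) - a t) * F (Suc t)) \<ge> - 2 * F0 * a 0"
proof -
  have F0: "F0 \<ge> 0" using F[of 0] by linarith
  have t1: "a 0 * F 0 \<ge> - a 0 * F0"
  proof -
    have "- F0 \<le> F 0" using F[of 0] by linarith
    then have "a 0 * (- F0) \<le> a 0 * F 0" using a_nonneg[of 0] by (rule mult_left_mono)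
    then show ?thesis by simp
  qed
  have t2: "a T * F T \<ge> - a T * F0"
  proof -
    have "- F0 \<le> F T" using F[of T] by linarith
    then have "a T * (- F0) \<le> a T * F T" using a_nonneg[of T] by (rule mult_left_mono)
    then show ?thesis by simp
  qed
  have t3: "(a (Suc t) - a t) * F (Suc t) \<ge> (a (Suc t) - a t) * F0" for t
  proof -
    have d: "a (Suc t) - a t \<le> 0" using a_dec[of t "Suc t"] by simp
    have "F (Suc t) \<le> F0" using F[of "Suc t"] by linarith
    then show ?thesis using d by (simp add: mult_left_mono_neg)
  qed
  have "(\<Sum>t<T. (a (Suc t) - a t) * F (Suc t)) \<ge> (\<Sum>t<T. (a (Suc t) - a t) * F0)"
    by (rule sum_mono) (rule t3)
  also have "(\<Sum>t<T. (a (Suc t) - a t) * F0) = (a T - a 0) * F0"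
    by (simp add: sum_distrib_right[symmetric] sum_lessThan_telescope)
  finally show ?thesis using t1 t2 by (simp add: algebra_simps)
qed

lemma a0: "a 0 = R" by (simp add: stepsize_def)

lemma ff_weighted:
  assumes xs: "xs \<in> feas_set g" "xs \<in> cball 0 R"
    and opt: "\<forall>x\<in>feas_set g. avg_obj f xs \<le> avg_obj f x"
    and strict: "\<forall>k. g k xs < 0"
  shows "2 * (\<Sum>t<Suc T. a t * Ff xs t)
      \<ge> - 2 * (real CARD('n) * (2 * L * R)) * R - K3 * (\<Sum>t<Suc T. (a t)\<^sup>2 * En t)"
proof -
  let ?N = "real CARD('n)"
  have Fb: "\<bar>Ff xs t\<bar> \<le> ?N * (2 * L * R)" for t
    using Ff_lower[OF xs(2), of t] Ff_upper[OF xs(2), of t] by linarith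
  have wb: "a 0 * Ff xs 0 + a T * Ff xs T + (\<Sum>t<T. (a (Suc t) - a t) * Ff xs (Suc t))
      \<ge> - 2 * (?N * (2 * L * R)) * R"
    using weight_bound[of "Ff xs", OF Fb, of T] a0 by simp
  have pb: "(\<Sum>t<T. a t * (Ff xs t + Ff xs (Suc t)))
      \<ge> (\<Sum>t<T. a t * (- (2 * L * ?N * nu (X t)) - L * ?N * (a t * En t)))"
    by (intro sum_mono mult_left_mono pairing[OF xs opt strict] a_nonneg)
  have e1: "(\<Sum>t<T. a t * (- (2 * L * ?N * nu (X t)) - L * ?N * (a t * En t)))
      = - (2 * L * ?N) * (\<Sum>t<T. a t * nu (X t)) - L * ?N * (\<Sum>t<T. (a t)\<^sup>2 * En t)"
    by (simp add: sum_subtractf sum_distrib_left sum_negf power2_eq_square algebra_simps)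
  have cs: "(\<Sum>t<T. a t * nu (X t)) \<le> (real p / dc) * (2 * (\<Sum>t<T. (a t)\<^sup>2 * En t))"
  proof -
    have "(\<Sum>s<T. a s * (2 * (a s * En s))) = 2 * (\<Sum>t<T. (a t)\<^sup>2 * En t)"
      by (simp add: sum_distrib_left power2_eq_square algebra_simps)
    then show ?thesis using cons_sum[of T] by simp
  qed
  have LN: "2 * L * ?N \<ge> 0" using L_nonneg by simp
  have "(2 * L * ?N) * (\<Sum>t<T. a t * nu (X t)) \<le> (2 * L * ?N) * ((real p / dc) * (2 * (\<Sum>t<T. (a t)\<^sup>2 * En t)))"
    using cs LN by (rule mult_left_mono)
  then have pb2: "(\<Sum>t<T. a t * (Ff xs t + Ff xs (Suc t))) \<ge> - K3 * (\<Sum>t<T. (a t)\<^sup>2 * En t)"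
    using pb unfolding e1 K3_def by (simp add: algebra_simps)
  have ext: "(\<Sum>t<T. (a t)\<^sup>2 * En t) \<le> (\<Sum>t<Suc T. (a t)\<^sup>2 * En t)"
    using En_nonneg[of T] by simp
  have K3: "K3 \<ge> 0" unfolding K3_def using L_nonneg dc_pos by simp
  have "K3 * (\<Sum>t<T. (a t)\<^sup>2 * En t) \<le> K3 * (\<Sum>t<Suc T. (a t)\<^sup>2 * En t)" using ext K3 by (rule mult_left_mono)
  then show ?thesis using weight_identity[of "Ff xs" T] wb pb2 by linarith
qed

end



lemma sum_if_le:
  fixes K :: real
  assumes "K \<ge> 0"
  shows "(\<Sum>t<T. if t < t0 then K else 0) \<le> real t0 * K"
proof -
  have "(\<Sum>t<T. if t < t0 then K else 0) = real (min T t0) * K"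
    by (induction T) (auto simp: min_def algebra_simps)
  also have "\<dots> \<le> real t0 * K" using assms by (intro mult_right_mono) auto
  finally show ?thesis .
qed

context alg begin

definition LsS where "LsS t = (\<Sum>i\<in>UNIV. Ls t i)"

lemma LsS_nonneg: "LsS t \<ge> 0" unfolding LsS_def by (simp add: sum_nonneg Ls_nonneg)

lemma LsS_le: "LsS t \<le> real CARD('n) * (real CARD('m) * B)"
proof -
  have "LsS t \<le> (\<Sum>i\<in>(UNIV::'n set). real CARD('m) * B)" unfolding LsS_def by (rule sum_mono) (rule Ls_le)
  then show ?thesis by simp
qed

lemma En_bound: "En t \<le> L * real CARD('n) + L * LsS t"
proof -
  have "En t \<le> (\<Sum>j\<in>UNIV. L * (1 + Ls t j))" unfolding En_def by (rule sum_mono) (rule gx_norm)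
  also have "\<dots> = L * real CARD('n) + L * LsS t"
    unfolding LsS_def by (simp add: sum.distrib sum_distrib_left distrib_left)
  finally show ?thesis .
qed

lemma part2:
  assumes R: "R > 0"
    and xs: "xs \<in> feas_set g" "xs \<in> cball 0 R"
    and opt: "\<forall>x\<in>feas_set g. avg_obj f xs \<le> avg_obj f x"
    and strict: "\<forall>k. g k xs < 0"
  shows "eventually (\<lambda>T. viol df dg g W R \<eta> T \<le> C2 * (\<eta> * ln (real T) / sqrt (real T))) sequentially"
proof -
  let ?N = "real CARD('n)"
  have N: "?N > 0" by simp
  define \<delta> where "\<delta> = Min (range (\<lambda>k. - g k xs))"
  have \<delta>le: "\<delta> \<le> - g k xs" for k unfolding \<delta>_def by (rule Min_le) auto
  have \<delta>pos: "\<delta> > 0"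
  proof -
    have "\<delta> \<in> range (\<lambda>k. - g k xs)" unfolding \<delta>_def by (rule Min_in) auto
    then show ?thesis using strict by auto
  qed
  have Gxs: "Gx xs t \<ge> \<delta> * LsS t" for t
  proof -
    have "\<delta> * Ls t i \<le> - (Lam t i \<bullet> gvec g xs)" for i
    proof -
      have "\<delta> * Ls t i = (\<Sum>k\<in>UNIV. Lam t i $ k * \<delta>)" unfolding Ls_def by (simp add: sum_distrib_left mult.commute)
      also have "\<dots> \<le> (\<Sum>k\<in>UNIV. Lam t i $ k * (- g k xs))"
        by (intro sum_mono mult_left_mono \<delta>le Lam_nonneg)
      also have "\<dots> = - (Lam t i \<bullet> gvec g xs)" unfolding lam_g by (simp add: sum_negf)
      finally show ?thesis .
    qed
    then show ?thesis unfolding Gx_def LsS_def sum_distrib_left by (rule sum_mono)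
  qed
  define cc where "cc = c2 + K3 * L"
  have K3: "K3 \<ge> 0" unfolding K3_def using L_nonneg dc_pos by simp
  have cc0: "cc \<ge> 0" unfolding cc_def using c2_nonneg K3 L_nonneg by simp
  obtain t0 where t0: "\<And>t. t \<ge> t0 \<Longrightarrow> R * cc \<le> (2 * \<delta>) * sqrt (real t)"
    using ev_const[of "2 * \<delta>" "R * cc"] \<delta>pos unfolding eventually_sequentially by auto
  have at0: "a t * cc \<le> 2 * \<delta>" if "t \<ge> t0" for t
  proof -
    have "R * cc \<le> (2 * \<delta>) * sqrt (real t + 1)"
      using t0[OF that] \<delta>pos by (smt (verit) mult_left_mono real_sqrt_le_mono)
    then show ?thesis unfolding stepsize_def by (simp add: divide_le_eq mult.commute)
  qed
  define Kt where "Kt = ?N * (real CARD('m) * B) * R\<^sup>2 * cc"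
  have Kt0: "Kt \<ge> 0" unfolding Kt_def using B_nonneg cc0 by simp
  have pw: "LsS t * ((a t)\<^sup>2 * cc - 2 * \<delta> * a t) \<le> (if t < t0 then Kt else 0)" for t
  proof (cases "t < t0")
    case True
    have "LsS t * ((a t)\<^sup>2 * cc - 2 * \<delta> * a t) \<le> LsS t * ((a t)\<^sup>2 * cc)"
      using LsS_nonneg \<delta>pos a_nonneg by (intro mult_left_mono) auto
    also have "\<dots> \<le> (?N * (real CARD('m) * B)) * (R\<^sup>2 * cc)"
      using LsS_le LsS_nonneg a_le_R a_nonneg cc0 B_nonneg
      by (intro mult_mono mult_right_mono power_mono) auto
    finally show ?thesis using True unfolding Kt_def by (simp add: mult.assoc)
  next
    case False
    have "(a t)\<^sup>2 * cc - 2 * \<delta> * a t = a t * (a t * cc - 2 * \<delta>)" by (simp add: power2_eq_square algebra_simps)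
    also have "\<dots> \<le> 0" using at0[of t] False a_nonneg by (intro mult_nonneg_nonpos) auto
    finally show ?thesis using False LsS_nonneg by (simp add: mult_nonneg_nonpos)
  qed
  define K6 where "K6 = c1 + K3 * L"
  have C2eq: "C2 = 2 * K6 * R + 1" unfolding C2_def K6_def by simp
  define Kc where "Kc = ?N * R\<^sup>2 + 2 * (?N * (2 * L * R)) * R + real t0 * Kt"
  have K60: "K6 \<ge> 0" unfolding K6_def using c1_nonneg K3 L_nonneg by simp
  have e1: "eventually (\<lambda>T. 2 / \<eta> \<le> R * sqrt (real T)) sequentially" by (rule ev_sqrt[OF R])
  have e2: "eventually (\<lambda>T. Kc / ?N + K6 * R\<^sup>2 \<le> ln (real T) * (R / 2)) sequentially"
  proof -
    have "eventually (\<lambda>T. (Kc / ?N + K6 * R\<^sup>2) / (R / 2) \<le> ln (real T)) sequentially" by (rule ev_ln)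
    then show ?thesis by eventually_elim (use R in \<open>simp add: divide_le_eq\<close>)
  qed
  have e3: "eventually (\<lambda>T::nat. T \<ge> 1) sequentially" by (rule eventually_ge_at_top)
  from e1 e2 e3 show ?thesis
  proof eventually_elim
    case (elim T)
    let ?P = "viol df dg g W R \<eta> T"
    have Sg: "S T \<ge> R * sqrt (real T)" by (rule sqrt_S)
    have "R * sqrt (real T) > 0" using R elim(3) by simp
    then have S: "S T > 0" using Sg by linarith
    have P0: "?P \<ge> 0" by (rule viol_nonneg)
    obtain T' where TT: "T = Suc T'" using elim(3) by (cases T) auto
    define Y where "Y = S T * ?P / \<eta>"
    define Z where "Z = ?P / \<eta>\<^sup>2"
    define Q where "Q = (\<Sum>t<T. (a t)\<^sup>2)"
    define U where "U = (\<Sum>t<T. (a t)\<^sup>2 * LsS t)"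
    define V where "V = (\<Sum>t<T. a t * LsS t)"
    define AF where "AF = (\<Sum>t<T. a t * Ff xs t)"
    define AG where "AG = (\<Sum>t<T. a t * Gx xs t)"
    have c: "2 * AF + 2 * AG + ?N * Y \<le> ?N * R\<^sup>2 + ?N * Z + (?N * c1 * Q + c2 * U)"
    proof -
      have "(\<Sum>t<T. (a t)\<^sup>2 * (\<Sum>i\<in>UNIV. c1 + c2 * Ls t i)) = ?N * c1 * Q + c2 * U"
        unfolding Q_def U_def LsS_def
        by (simp add: sum.distrib sum_distrib_left sum_distrib_right algebra_simps)
      moreover have "S T * ?N * ?P / \<eta> = ?N * Y" "?N * ?P / \<eta>\<^sup>2 = ?N * Z" unfolding Y_def Z_def by simp_all
      ultimately show ?thesis using core3[OF xs(2) S] unfolding AF_def AG_def by simp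
    qed
    have i: "2 * AF \<ge> - 2 * (?N * (2 * L * R)) * R - (K3 * L * ?N * Q + K3 * L * U)"
    proof -
      have "(\<Sum>t<T. (a t)\<^sup>2 * En t) \<le> (\<Sum>t<T. (a t)\<^sup>2 * (L * ?N + L * LsS t))"
        by (intro sum_mono mult_left_mono En_bound) simp
      also have "\<dots> = L * ?N * Q + L * U" unfolding Q_def U_def
        by (simp add: sum.distrib sum_distrib_left sum_distrib_right algebra_simps)
      finally have "K3 * (\<Sum>t<T. (a t)\<^sup>2 * En t) \<le> K3 * (L * ?N * Q + L * U)" using K3 by (rule mult_left_mono)
      then show ?thesis using ff_weighted[OF xs opt strict, of T'] unfolding AF_def TT[symmetric]
        by (simp add: algebra_simps)
    qed
    have iii: "AG \<ge> \<delta> * V"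
    proof -
      have "(\<Sum>t<T. a t * (\<delta> * LsS t)) \<le> AG" unfolding AG_def by (intro sum_mono mult_left_mono Gxs a_nonneg)
      moreover have "(\<Sum>t<T. a t * (\<delta> * LsS t)) = \<delta> * V" unfolding V_def by (simp add: sum_distrib_left algebra_simps)
      ultimately show ?thesis by simp
    qed
    have v: "c2 * U + K3 * L * U - 2 * (\<delta> * V) \<le> real t0 * Kt"
    proof -
      have "(\<Sum>t<T. LsS t * ((a t)\<^sup>2 * cc - 2 * \<delta> * a t)) \<le> (\<Sum>t<T. if t < t0 then Kt else 0)"
        by (rule sum_mono) (rule pw)
      also have "\<dots> \<le> real t0 * Kt" by (rule sum_if_le[OF Kt0])
      finally have h: "(\<Sum>t<T. LsS t * ((a t)\<^sup>2 * cc - 2 * \<delta> * a t)) \<le> real t0 * Kt" .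
      have "(\<Sum>t<T. LsS t * ((a t)\<^sup>2 * cc - 2 * \<delta> * a t)) = c2 * U + K3 * L * U - 2 * (\<delta> * V)"
        unfolding U_def V_def cc_def
        by (simp add: sum_subtractf sum_distrib_left sum.distrib algebra_simps)
      then show ?thesis using h by simp
    qed
    have main: "?N * Y - ?N * Z \<le> ?N * R\<^sup>2 + 2 * (?N * (2 * L * R)) * R + ?N * c1 * Q + K3 * L * ?N * Q + real t0 * Kt"
      using c i iii v by linarith
    also have "\<dots> = Kc + ?N * (K6 * Q)" unfolding Kc_def K6_def by (simp add: algebra_simps)
    finally have main': "?N * (Y - Z) \<le> ?N * (Kc / ?N + K6 * Q)"
      using N by (simp add: algebra_simps)
    then have yz: "Y - Z \<le> Kc / ?N + K6 * Q" using N by (rule mult_left_le_imp_le)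
    have q2: "Z \<le> Y / 2"
    proof -
      have "Z = (2 / \<eta>) * ?P / (2 * \<eta>)" unfolding Z_def using eta_pos by (simp add: power2_eq_square field_simps)
      also have "\<dots> \<le> S T * ?P / (2 * \<eta>)"
        using elim(1) Sg P0 eta_pos by (intro divide_right_mono mult_right_mono) auto
      finally show ?thesis unfolding Y_def by simp
    qed
    have qq: "K6 * Q \<le> K6 * R\<^sup>2 + K6 * R\<^sup>2 * ln (real T)"
      using sumsq[OF elim(3)] K60 unfolding Q_def by (simp add: mult_left_mono algebra_simps)
      (metis distrib_left mult.assoc mult_left_mono K60)
    have "Y / 2 \<le> ln (real T) * (R / 2) + K6 * R\<^sup>2 * ln (real T)"
      using yz q2 qq elim(2) by linarith
    also have "\<dots> = (R / 2) * C2 * ln (real T)" unfolding C2eq by (simp add: power2_eq_square algebra_simps)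
    finally have y2: "Y / 2 \<le> (R / 2) * C2 * ln (real T)" .
    have "R * sqrt (real T) * ?P / (2 * \<eta>) \<le> S T * ?P / (2 * \<eta>)"
      using Sg P0 eta_pos by (intro divide_right_mono mult_right_mono) auto
    also have "\<dots> = Y / 2" unfolding Y_def by simp
    finally have "R * sqrt (real T) * ?P / (2 * \<eta>) \<le> (R / 2) * C2 * ln (real T)" using y2 by linarith
    then have "(R * sqrt (real T) / (2 * \<eta>)) * ?P \<le> (R * sqrt (real T) / (2 * \<eta>)) * (C2 * (\<eta> * ln (real T) / sqrt (real T)))"
      using R eta_pos \<open>R * sqrt (real T) > 0\<close> by (simp add: field_simps)
    moreover have "R * sqrt (real T) / (2 * \<eta>) > 0" using \<open>R * sqrt (real T) > 0\<close> eta_pos by simp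
    ultimately show ?case by (rule mult_left_le_imp_le)
  qed
qed

end



context alg begin

lemma viol_zero:
  assumes R0: "R = 0" and ne: "feas_set g \<noteq> {}" and sub: "feas_set g \<subseteq> cball 0 R"
  shows "viol df dg g W R \<eta> T = 0"
proof -
  have X00: "X t i = 0" for t i using X_ball[of t i] R0 by simp
  have xh0: "xh i T = 0" for i unfolding xh_def X00 by simp
  obtain x where x: "x \<in> feas_set g" using ne by blast
  then have "x = 0" using sub R0 by auto
  then have g0: "g k 0 \<le> 0" for k using x unfolding feas_set_def by auto
  have vk: "vv T $ k \<le> 0" for k
  proof -
    have "vv T $ k = (1 / real CARD('n)) * (\<Sum>i\<in>(UNIV::'n set). g k 0)"
      unfolding vv_def xh0 by (simp only: vector_scaleR_component sum_component gvec_def vec_lambda_beta real_scaleR_def)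
    also have "\<dots> \<le> 0" using g0[of k] by (intro mult_nonneg_nonpos sum_nonpos) auto
    finally show ?thesis .
  qed
  have "pos_part (vv T) = 0"
    unfolding pos_part_def using vk by (simp add: vec_eq_iff max_def) (meson antisym)
  then show ?thesis unfolding viol_eq by simp
qed

end

theorem theorem3:
  fixes f :: "'n::finite \<Rightarrow> real^'d::finite \<Rightarrow> real"
    and df :: "'n \<Rightarrow> real^'d \<Rightarrow> real^'d"
    and g :: "'m::finite \<Rightarrow> real^'d \<Rightarrow> real"
    and dg :: "'m \<Rightarrow> real^'d \<Rightarrow> real^'d"
    and W :: "'n \<Rightarrow> 'n \<Rightarrow> real"
    and E :: "('n \<times> 'n) set"
    and R L :: real
  assumes X_nonempty: "feas_set g \<noteq> {}"
    and X_convex: "convex (feas_set g)"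
    and X_compact: "compact (feas_set g)"
    and R_ball: "feas_set g \<subseteq> cball 0 R"
    and R_smallest: "\<And>r. feas_set g \<subseteq> cball 0 r \<Longrightarrow> R \<le> r"
    and slater: "\<exists>xt. \<forall>k. g k xt < 0"
    and f_convex: "\<And>i. convex_on (cball 0 R) (f i)"
    and g_convex: "\<And>k. convex_on (cball 0 R) (g k)"
    and df_subgrad: "\<And>i x y. x \<in> cball 0 R \<Longrightarrow> y \<in> cball 0 R \<Longrightarrow> f i y \<ge> f i x + df i x \<bullet> (y - x)"
    and dg_subgrad: "\<And>k x y. x \<in> cball 0 R \<Longrightarrow> y \<in> cball 0 R \<Longrightarrow> g k y \<ge> g k x + dg k x \<bullet> (y - x)"
    and df_bound: "\<And>i x. x \<in> cball 0 R \<Longrightarrow> norm (df i x) \<le> L"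
    and dg_bound: "\<And>k x. x \<in> cball 0 R \<Longrightarrow> norm (dg k x) \<le> L"
    and E_sym: "sym E"
    and E_connected: "\<And>i j. (i, j) \<in> E\<^sup>*"
    and W_nonneg: "\<And>i j. W i j \<ge> 0"
    and W_rows: "\<And>i. (\<Sum>j\<in>UNIV. W i j) = 1"
    and W_cols: "\<And>j. (\<Sum>i\<in>UNIV. W i j) = 1"
    and W_edge: "\<And>i j. (i, j) \<in> E \<Longrightarrow> W i j > 0"
    and W_nonedge: "\<And>i j. (i, j) \<notin> E \<Longrightarrow> W i j = 0"
  shows "(\<exists>C. \<forall>\<eta>. \<eta> > 0 \<and> (\<forall>t. \<eta> * stepsize R t \<le> 1 / 2) \<longrightarrow>
            eventually (\<lambda>T. viol df dg g W R \<eta> T \<le> C * \<eta>) sequentially)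
       \<and> ((\<exists>xs. xs \<in> feas_set g \<and> (\<forall>x\<in>feas_set g. avg_obj f xs \<le> avg_obj f x)
               \<and> (\<forall>k. g k xs < 0)) \<longrightarrow>
          (\<exists>C. \<forall>\<eta>. \<eta> > 0 \<and> (\<forall>t. \<eta> * stepsize R t \<le> 1 / 2) \<longrightarrow>
            eventually (\<lambda>T. viol df dg g W R \<eta> T \<le> C * (\<eta> * ln (real T) / sqrt (real T))) sequentially))"
proof -
  have R0: "R \<ge> 0"
  proof -
    obtain x where "x \<in> feas_set g" using X_nonempty by blast
    then have "x \<in> cball 0 R" using R_ball by blast
    then show ?thesis by (metis mem_cball_0 norm_ge_zero order_trans)
  qed
  interpret base W E df f g dg R L
    by unfold_locales (use E_sym E_connected W_nonneg W_rows W_cols W_edge W_nonedge df_subgrad dg_subgrad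
        df_bound dg_bound R0 in auto)
  show ?thesis
  proof (cases "R = 0")
    case True
    have v0: "viol df dg g W R \<eta> T = 0" if "\<eta> > 0" "\<forall>t. \<eta> * stepsize R t \<le> 1 / 2" for \<eta> T
    proof -
      interpret alg W E df f g dg R L \<eta> by unfold_locales (use that in auto)
      show ?thesis by (rule viol_zero[OF True X_nonempty R_ball])
    qed
    show ?thesis
    proof (intro conjI impI)
      show "\<exists>C. \<forall>\<eta>. \<eta> > 0 \<and> (\<forall>t. \<eta> * stepsize R t \<le> 1 / 2) \<longrightarrow>
            eventually (\<lambda>T. viol df dg g W R \<eta> T \<le> C * \<eta>) sequentially"
        by (rule exI[of _ 0]) (auto simp: v0)
      show "\<exists>C. \<forall>\<eta>. \<eta> > 0 \<and> (\<forall>t. \<eta> * stepsize R t \<le> 1 / 2) \<longrightarrow>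
            eventually (\<lambda>T. viol df dg g W R \<eta> T \<le> C * (\<eta> * ln (real T) / sqrt (real T))) sequentially"
        by (rule exI[of _ 0]) (auto simp: v0)
    qed
  next
    case False
    then have Rp: "R > 0" using R0 by simp
    show ?thesis
    proof (intro conjI impI)
      show "\<exists>C. \<forall>\<eta>. \<eta> > 0 \<and> (\<forall>t. \<eta> * stepsize R t \<le> 1 / 2) \<longrightarrow>
            eventually (\<lambda>T. viol df dg g W R \<eta> T \<le> C * \<eta>) sequentially"
      proof (rule exI[of _ C1], intro allI impI)
        fix \<eta> assume h: "\<eta> > 0 \<and> (\<forall>t. \<eta> * stepsize R t \<le> 1 / 2)"
        interpret alg W E df f g dg R L \<eta> by unfold_locales (use h in auto)
        obtain x where x: "x \<in> feas_set g" using X_nonempty by blast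
        then have "x \<in> cball 0 R" using R_ball by blast
        then show "eventually (\<lambda>T. viol df dg g W R \<eta> T \<le> C1 * \<eta>) sequentially"
          by (rule part1[OF Rp x])
      qed
    next
      assume ex: "\<exists>xs. xs \<in> feas_set g \<and> (\<forall>x\<in>feas_set g. avg_obj f xs \<le> avg_obj f x) \<and> (\<forall>k. g k xs < 0)"
      then obtain xs where xs: "xs \<in> feas_set g" "\<forall>x\<in>feas_set g. avg_obj f xs \<le> avg_obj f x" "\<forall>k. g k xs < 0"
        by blast
      have xsb: "xs \<in> cball 0 R" using xs(1) R_ball by blast
      show "\<exists>C. \<forall>\<eta>. \<eta> > 0 \<and> (\<forall>t. \<eta> * stepsize R t \<le> 1 / 2) \<longrightarrow>
            eventually (\<lambda>T. viol df dg g W R \<eta> T \<le> C * (\<eta> * ln (real T) / sqrt (real T))) sequentially"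
      proof (rule exI[of _ C2], intro allI impI)
        fix \<eta> assume h: "\<eta> > 0 \<and> (\<forall>t. \<eta> * stepsize R t \<le> 1 / 2)"
        interpret alg W E df f g dg R L \<eta> by unfold_locales (use h in auto)
        show "eventually (\<lambda>T. viol df dg g W R \<eta> T \<le> C2 * (\<eta> * ln (real T) / sqrt (real T))) sequentially"
          by (rule part2[OF Rp xs(1) xsb xs(2) xs(3)])
      qed
    qed
  qed
qed


end
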